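(* Let the Super Harmonic algorithm (with arbitrary admissible parameters as described in the context) be run on a list $L$ of items with sizes in $(0,1]$, and let $A(L)$ be the number of bins it uses. Let $W^1,\dots,W^{K+1}$ be the weighting functions defined in the context. Then \[ A(L)\le \max_{1\le i\le K+1}\Big\{\sum_{p\in L} W^i(p)\Big\}+O(1), \] where the $O(1)$ term depends only on the parameters of the algorithm and not on $L$.
   Context: One-dimensional online bin packing: items with sizes in $(0,1]$ arrive one by one and must be irrevocably placed into bins of capacity $1$. Super Harmonic algorithm. Parameters: an integer $k\ge1$, reals $t_1=1>t_2>\dots>t_k>t_{k+1}=\epsilon>t_{k+2}=0$, intervals $I_i=(t_{i+1},t_i]$ for $i=1,\dots,k+1$ (an item of size $x$ is of type $i$ if $x\in I_i$), and constants $\alpha_1,\dots,\alpha_k\in[0,1]$. Let $\beta_i=\lfloor 1/t_i\rfloor$ and $\delta_i=1-t_i\beta_i$. Fix reals $0=\Delta_0<\Delta_1<\dots<\Delta_K<1/2$ with $K\le k$ and a map $\phi:\{1,\dots,k\}\to\{0,\dots,K\}$ with $\Delta_{\phi(i)}\le\delta_i$. Let $\varphi(i)=\min\{j: t_i\le\Delta_j,\ 1\le j\le K\}$ (and $\varphi(i)=0$ if $t_i>\Delta_K$). Let $\gamma_i=0$ if $t_i>\Delta_K$, and otherwise $\gamma_i=\max\{1,\lfloor\Delta_1/t_i\rfloor\}$. Bins are named in groups: $(i)$ for $\phi(i)=0$ (only blue type-$i$ items); $(i,?)$ for $\phi(i)\neq0$ (currently only blue type-$i$ items); $(?,j)$ for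 $\alpha_j\ne0$ (currently only red type-$j$ items); $(i,j)$ for $\phi(i)\ne0,\alpha_j\ne0,\gamma_jt_j\le\Delta_{\phi(i)}$ (blue type-$i$ and red type-$j$ items). Counters $s_i,e_i$ start at $0$. For each arriving item $p$ of type $i$: (a) if $i=k+1$, pack $p$ by Next Fit into bins reserved for type $k+1$; (b) otherwise set $s_i\gets s_i+1$; if $e_i<\lfloor\alpha_is_i\rfloor$ then set $e_i\gets e_i+1$ and color $p$ red: if some bin in group $(?,i)$ has fewer than $\gamma_i$ type-$i$ items, put $p$ there; else if for some $j$ a bin in group $(j,i)$ has fewer than $\gamma_i$ type-$i$ items, put $p$ there; else if some bin in group $(j,?)$ has $\Delta_{\phi(j)}\ge\gamma_it_i$, put $p$ there and rename the bin $(j,i)$; otherwise open a new bin $(?,i)$ for $p$. (c) otherwise color $p$ blue: if $\phi(i)=0$, put $p$ into a group-$(i)$ bin with fewer than $\beta_i$ items if one exists, else open a new group-$(i)$ bin. If $\phi(i)\ne0$: if for some $j$ a bin in group $(i,j)$ or $(i,?)$ has fewer than $\beta_i$ type-$i$ items, put $p$ there; else if some bin in group $(?,j)$ has $\Delta_{\phi(i)}\ge\gamma_jt_j$, put $p$ there and rename it $(i,j)$; otherwise open a new bin $(i,?)$ for $p$. Weighting functions. In all formulas below a term $\alpha_i/\gamma_i$ or $\alpha_i/(2\gamma_i)$ is replaced by $0$ when $\gamma_i=0$. For $x\in I_{k+1}$, $W^j(x)=x/(1-\epsilon)$ for every $j$. For $x\in I_i$, $1\le i\le k$: $W^1(x)=\frac{1-\alpha_i}{\beta_i}$.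 For $2\le j\le K$, $W^{K+2-j}(x)$ equals $\frac{1-\alpha_i}{\beta_i}+\frac{\alpha_i}{2\gamma_i}$ if $\phi(i)<j,\varphi(i)<j$; $\frac{1-\alpha_i}{\beta_i}+\frac{\alpha_i}{\gamma_i}$ if $\phi(i)<j,\varphi(i)\ge j$; $\frac{1-\alpha_i}{2\beta_i}+\frac{\alpha_i}{\gamma_i}$ if $\phi(i)\ge j,\varphi(i)\ge j$; $\frac{1-\alpha_i}{2\beta_i}+\frac{\alpha_i}{2\gamma_i}$ if $\phi(i)\ge j,\varphi(i)<j$. $W^{K+1}(x)$ equals $\frac{1-\alpha_i}{\beta_i}$ if $\phi(i)=0,\varphi(i)=0$; $\frac{1-\alpha_i}{\beta_i}+\frac{\alpha_i}{\gamma_i}$ if $\phi(i)=0,\varphi(i)>0$; $0$ if $\phi(i)>0,\varphi(i)=0$; $\frac{\alpha_i}{\gamma_i}$ if $\phi(i)>0,\varphi(i)>0$.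
   Formalization: The admissible parameters also satisfy $\alpha_i=0$ whenever $\gamma_i=0$, for 1 <= i <= k, so only types with $t_i\le\Delta_K$ can have red items. The statement above fails without it. *)

theory Defs
  imports Complex_Main
begin

record shparams =
  sh_k     :: nat
  sh_t     :: "nat \<Rightarrow> real"       \<comment> \<open>t_1, ..., t_{k+2}\<close>
  sh_alpha :: "nat \<Rightarrow> real"       \<comment> \<open>alpha_1, ..., alpha_k\<close>
  sh_K     :: nat
  sh_Delta :: "nat \<Rightarrow> real"       \<comment> \<open>Delta_0, ..., Delta_K\<close>
  sh_phi   :: "nat \<Rightarrow> nat"        \<comment> \<open>phi : {1..k} -> {0..K}\<close>

definition sh_eps :: "shparams \<Rightarrow> real" where
  "sh_eps P = sh_t P (sh_k P + 1)"

definition sh_beta :: "shparams \<Rightarrow> nat \<Rightarrow> nat" where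
  "sh_beta P i = nat \<lfloor>1 / sh_t P i\<rfloor>"

definition sh_delta :: "shparams \<Rightarrow> nat \<Rightarrow> real" where
  "sh_delta P i = 1 - sh_t P i * real (sh_beta P i)"

definition sh_varphi :: "shparams \<Rightarrow> nat \<Rightarrow> nat" where
  "sh_varphi P i =
     (if sh_t P i > sh_Delta P (sh_K P) then 0
      else (LEAST j. 1 \<le> j \<and> j \<le> sh_K P \<and> sh_t P i \<le> sh_Delta P j))"

definition sh_gamma :: "shparams \<Rightarrow> nat \<Rightarrow> nat" where
  "sh_gamma P i =
     (if sh_t P i > sh_Delta P (sh_K P) then 0
      else max 1 (nat \<lfloor>sh_Delta P 1 / sh_t P i\<rfloor>))"

definition sh_admissible :: "shparams \<Rightarrow> bool" where
  "sh_admissible P \<longleftrightarrow>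
     1 \<le> sh_k P \<and>
     sh_t P 1 = 1 \<and>
     (\<forall>i\<in>{1..sh_k P + 1}. sh_t P (i + 1) < sh_t P i) \<and>
     sh_t P (sh_k P + 2) = 0 \<and>
     (\<forall>i\<in>{1..sh_k P}. 0 \<le> sh_alpha P i \<and> sh_alpha P i \<le> 1) \<and>
     sh_K P \<le> sh_k P \<and>
     sh_Delta P 0 = 0 \<and>
     (\<forall>j<sh_K P. sh_Delta P j < sh_Delta P (j + 1)) \<and>
     sh_Delta P (sh_K P) < 1 / 2 \<and>
     (\<forall>i\<in>{1..sh_k P}. sh_phi P i \<le> sh_K P \<and> sh_Delta P (sh_phi P i) \<le> sh_delta P i)"

definition sh_type :: "shparams \<Rightarrow> real \<Rightarrow> nat" where
  "sh_type P x = (THE i. 1 \<le> i \<and> i \<le> sh_k P + 1 \<and> sh_t P (i + 1) < x \<and> x \<le> sh_t P i)"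

text \<open>sh_W P m x is W^m(x), for m in {1..K+1}. For 2 <= j <= K, W^{K+2-j} is
  given by the four-case formula with j = K+2-m.\<close>
definition sh_W :: "shparams \<Rightarrow> nat \<Rightarrow> real \<Rightarrow> real" where
  "sh_W P m x =
    (let i = sh_type P x in
     if i = sh_k P + 1 then x / (1 - sh_eps P)
     else
       (let a = sh_alpha P i; b = real (sh_beta P i); g = sh_gamma P i;
            rf = (if g = 0 then 0 else a / real g);
            rh = (if g = 0 then 0 else a / (2 * real g));
            ph = sh_phi P i; vp = sh_varphi P i; K = sh_K P in
        if m = 1 then (1 - a) / b
        else if m = K + 1 then
          (if ph = 0 \<and> vp = 0 then (1 - a) / b
           else if ph = 0 \<and> vp > 0 then (1 - a) / b + rf
           else if ph > 0 \<and> vp = 0 then 0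
           else rf)
        else
          (let j = K + 2 - m in
           if ph < j \<and> vp < j then (1 - a) / b + rh
           else if ph < j \<and> vp \<ge> j then (1 - a) / b + rf
           else if ph \<ge> j \<and> vp \<ge> j then (1 - a) / (2 * b) + rf
           else (1 - a) / (2 * b) + rh)))"

datatype color = Red | Blue

text \<open>Bin groups: Single i = (i), BlueOnly i = (i,?), RedOnly j = (?,j),
  Mixed i j = (i,j), Small = bins reserved for type k+1 (Next Fit).\<close>
datatype label = Single nat | BlueOnly nat | RedOnly nat | Mixed nat nat | Small

type_synonym bin = "label \<times> (real \<times> color) list"

text \<open>State: list of bins (in order of opening), counters s and e.\<close>
type_synonym state = "bin list \<times> (nat \<Rightarrow> nat) \<times> (nat \<Rightarrow> nat)"

definition sh_init :: state where
  "sh_init = ([], (\<lambda>_. 0), (\<lambda>_. 0))"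

definition cnt :: "shparams \<Rightarrow> color \<Rightarrow> nat \<Rightarrow> bin \<Rightarrow> nat" where
  "cnt P c i b = length (filter (\<lambda>(y, col). col = c \<and> sh_type P y = i) (snd b))"

definition level :: "bin \<Rightarrow> real" where
  "level b = sum_list (map fst (snd b))"

definition put :: "bin list \<Rightarrow> nat \<Rightarrow> label \<Rightarrow> real \<Rightarrow> color \<Rightarrow> bin list" where
  "put bs n lab x c = bs[n := (lab, snd (bs ! n) @ [(x, c)])]"

text \<open>One step of the algorithm (nondeterministic wherever the description says
  "some bin" / "for some j"). The current Next-Fit bin is the most recently opened
  Small bin.\<close>
inductive sh_step :: "shparams \<Rightarrow> state \<Rightarrow> real \<Rightarrow> state \<Rightarrow> bool" for P where
  nf_fit:
    "\<lbrakk> sh_type P x = sh_k P + 1; n < length bs; fst (bs ! n) = Small;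
       \<forall>m. n < m \<and> m < length bs \<longrightarrow> fst (bs ! m) \<noteq> Small;
       level (bs ! n) + x \<le> 1 \<rbrakk>
     \<Longrightarrow> sh_step P (bs, s, e) x (put bs n Small x Blue, s, e)"
| nf_new:
    "\<lbrakk> sh_type P x = sh_k P + 1;
       \<forall>n. n < length bs \<and> fst (bs ! n) = Small \<and>
            (\<forall>m. n < m \<and> m < length bs \<longrightarrow> fst (bs ! m) \<noteq> Small) \<longrightarrow>
            level (bs ! n) + x > 1 \<rbrakk>
     \<Longrightarrow> sh_step P (bs, s, e) x (bs @ [(Small, [(x, Blue)])], s, e)"
| red1:
    "\<lbrakk> sh_type P x = i; i \<le> sh_k P; s' = s(i := s i + 1);
       e i < nat \<lfloor>sh_alpha P i * real (s' i)\<rfloor>;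
       n < length bs; fst (bs ! n) = RedOnly i; cnt P Red i (bs ! n) < sh_gamma P i \<rbrakk>
     \<Longrightarrow> sh_step P (bs, s, e) x (put bs n (RedOnly i) x Red, s', e(i := e i + 1))"
| red2:
    "\<lbrakk> sh_type P x = i; i \<le> sh_k P; s' = s(i := s i + 1);
       e i < nat \<lfloor>sh_alpha P i * real (s' i)\<rfloor>;
       \<not> (\<exists>n'<length bs. fst (bs ! n') = RedOnly i \<and> cnt P Red i (bs ! n') < sh_gamma P i);
       n < length bs; fst (bs ! n) = Mixed j i; cnt P Red i (bs ! n) < sh_gamma P i \<rbrakk>
     \<Longrightarrow> sh_step P (bs, s, e) x (put bs n (Mixed j i) x Red, s', e(i := e i + 1))"
| red3:
    "\<lbrakk> sh_type P x = i; i \<le> sh_k P; s' = s(i := s i + 1);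
       e i < nat \<lfloor>sh_alpha P i * real (s' i)\<rfloor>;
       \<not> (\<exists>n'<length bs. fst (bs ! n') = RedOnly i \<and> cnt P Red i (bs ! n') < sh_gamma P i);
       \<not> (\<exists>n'<length bs. \<exists>j'. fst (bs ! n') = Mixed j' i \<and> cnt P Red i (bs ! n') < sh_gamma P i);
       n < length bs; fst (bs ! n) = BlueOnly j;
       sh_Delta P (sh_phi P j) \<ge> real (sh_gamma P i) * sh_t P i \<rbrakk>
     \<Longrightarrow> sh_step P (bs, s, e) x (put bs n (Mixed j i) x Red, s', e(i := e i + 1))"
| red4:
    "\<lbrakk> sh_type P x = i; i \<le> sh_k P; s' = s(i := s i + 1);
       e i < nat \<lfloor>sh_alpha P i * real (s' i)\<rfloor>;
       \<not> (\<exists>n'<length bs. fst (bs ! n') = RedOnly i \<and> cnt P Red i (bs ! n') < sh_gamma P i);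
       \<not> (\<exists>n'<length bs. \<exists>j'. fst (bs ! n') = Mixed j' i \<and> cnt P Red i (bs ! n') < sh_gamma P i);
       \<not> (\<exists>n'<length bs. \<exists>j'. fst (bs ! n') = BlueOnly j' \<and>
              sh_Delta P (sh_phi P j') \<ge> real (sh_gamma P i) * sh_t P i) \<rbrakk>
     \<Longrightarrow> sh_step P (bs, s, e) x (bs @ [(RedOnly i, [(x, Red)])], s', e(i := e i + 1))"
| blue1:
    "\<lbrakk> sh_type P x = i; i \<le> sh_k P; s' = s(i := s i + 1);
       \<not> e i < nat \<lfloor>sh_alpha P i * real (s' i)\<rfloor>; sh_phi P i = 0;
       n < length bs; fst (bs ! n) = Single i; cnt P Blue i (bs ! n) < sh_beta P i \<rbrakk>
     \<Longrightarrow> sh_step P (bs, s, e) x (put bs n (Single i) x Blue, s', e)"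
| blue2:
    "\<lbrakk> sh_type P x = i; i \<le> sh_k P; s' = s(i := s i + 1);
       \<not> e i < nat \<lfloor>sh_alpha P i * real (s' i)\<rfloor>; sh_phi P i = 0;
       \<not> (\<exists>n'<length bs. fst (bs ! n') = Single i \<and> cnt P Blue i (bs ! n') < sh_beta P i) \<rbrakk>
     \<Longrightarrow> sh_step P (bs, s, e) x (bs @ [(Single i, [(x, Blue)])], s', e)"
| blue3:
    "\<lbrakk> sh_type P x = i; i \<le> sh_k P; s' = s(i := s i + 1);
       \<not> e i < nat \<lfloor>sh_alpha P i * real (s' i)\<rfloor>; sh_phi P i \<noteq> 0;
       n < length bs; fst (bs ! n) = BlueOnly i \<or> (\<exists>j. fst (bs ! n) = Mixed i j);
       cnt P Blue i (bs ! n) < sh_beta P i \<rbrakk>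
     \<Longrightarrow> sh_step P (bs, s, e) x (put bs n (fst (bs ! n)) x Blue, s', e)"
| blue4:
    "\<lbrakk> sh_type P x = i; i \<le> sh_k P; s' = s(i := s i + 1);
       \<not> e i < nat \<lfloor>sh_alpha P i * real (s' i)\<rfloor>; sh_phi P i \<noteq> 0;
       \<not> (\<exists>n'<length bs. (fst (bs ! n') = BlueOnly i \<or> (\<exists>j'. fst (bs ! n') = Mixed i j')) \<and>
              cnt P Blue i (bs ! n') < sh_beta P i);
       n < length bs; fst (bs ! n) = RedOnly j;
       sh_Delta P (sh_phi P i) \<ge> real (sh_gamma P j) * sh_t P j \<rbrakk>
     \<Longrightarrow> sh_step P (bs, s, e) x (put bs n (Mixed i j) x Blue, s', e)"
| blue5:
    "\<lbrakk> sh_type P x = i; i \<le> sh_k P; s' = s(i := s i + 1);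
       \<not> e i < nat \<lfloor>sh_alpha P i * real (s' i)\<rfloor>; sh_phi P i \<noteq> 0;
       \<not> (\<exists>n'<length bs. (fst (bs ! n') = BlueOnly i \<or> (\<exists>j'. fst (bs ! n') = Mixed i j')) \<and>
              cnt P Blue i (bs ! n') < sh_beta P i);
       \<not> (\<exists>n'<length bs. \<exists>j'. fst (bs ! n') = RedOnly j' \<and>
              sh_Delta P (sh_phi P i) \<ge> real (sh_gamma P j') * sh_t P j') \<rbrakk>
     \<Longrightarrow> sh_step P (bs, s, e) x (bs @ [(BlueOnly i, [(x, Blue)])], s', e)"

inductive sh_exec :: "shparams \<Rightarrow> state \<Rightarrow> real list \<Rightarrow> state \<Rightarrow> bool" for P where
  exec_nil: "sh_exec P st [] st"
| exec_cons: "\<lbrakk> sh_step P st x st'; sh_exec P st' xs st'' \<rbrakk> \<Longrightarrow> sh_exec P st (x # xs) st''"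

definition nbins :: "state \<Rightarrow> nat" where
  "nbins st = length (fst st)"

end

theory Submission
  imports Defs
begin

lemma sum_list_map_update:
  fixes g :: "'a \<Rightarrow> real"
  assumes "n < length xs"
  shows "sum_list (map g (xs[n := y])) = sum_list (map g xs) - g (xs ! n) + g y"
  using assms
proof (induction xs arbitrary: n)
  case Nil then show ?case by simp
next
  case (Cons a xs)
  then show ?case by (cases n) auto
qed

lemma filter_update_notP:
  assumes "\<not> Q (xs ! n)" "\<not> Q y"
  shows "filter Q (xs[n := y]) = filter Q xs"
  using assms
proof (induction xs arbitrary: n)
  case Nil then show ?case by simp
next
  case (Cons a xs)
  then show ?case by (cases n) auto
qed

lemma t_step:
  assumes adm: "sh_admissible P" and "1 \<le> b" "b \<le> sh_k P + 1"
  shows "sh_t P (Suc b) < sh_t P b"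
  using assms unfolding sh_admissible_def by auto

lemma t_strict:
  assumes adm: "sh_admissible P" and a: "1 \<le> a" and ab: "a < b" and bk: "b \<le> sh_k P + 2"
  shows "sh_t P b < sh_t P a"
  using ab bk
proof (induction b)
  case 0 then show ?case by simp
next
  case (Suc b)
  show ?case
  proof (cases "a = b")
    case True then show ?thesis using t_step[OF adm] Suc.prems a by auto
  next
    case False then have "a < b" using Suc.prems by simp
    then have "sh_t P b < sh_t P a" using Suc by simp
    moreover have "sh_t P (Suc b) < sh_t P b" using t_step[OF adm] a \<open>a<b\<close> Suc.prems by simp
    ultimately show ?thesis by simp
  qed
qed

lemma t_le:
  assumes adm: "sh_admissible P" and "1 \<le> a" "a \<le> b" "b \<le> sh_k P + 2"
  shows "sh_t P b \<le> sh_t P a"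
  using t_strict[OF adm, of a b] assms by (cases "a = b") auto

lemma t_pos:
  assumes adm: "sh_admissible P" and "1 \<le> i" "i \<le> sh_k P + 1"
  shows "0 < sh_t P i"
  using t_strict[OF adm, of i "sh_k P + 2"] assms adm unfolding sh_admissible_def by auto

lemma t_le1:
  assumes adm: "sh_admissible P" and "1 \<le> i" "i \<le> sh_k P + 2"
  shows "sh_t P i \<le> 1"
  using t_le[OF adm, of 1 i] assms adm unfolding sh_admissible_def by auto

lemma type_props:
  assumes adm: "sh_admissible P" and x: "0 < x" "x \<le> 1"
  shows "1 \<le> sh_type P x \<and> sh_type P x \<le> sh_k P + 1 \<and> sh_t P (sh_type P x + 1) < x \<and> x \<le> sh_t P (sh_type P x)"
proof -
  let ?Q = "\<lambda>i. 1 \<le> i \<and> i \<le> sh_k P + 1 \<and> sh_t P (i + 1) < x \<and> x \<le> sh_t P i"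
  define S where "S = {i. 1 \<le> i \<and> i \<le> sh_k P + 1 \<and> x \<le> sh_t P i}"
  have fin: "finite S" unfolding S_def by (rule finite_subset[of _ "{..sh_k P + 1}"]) auto
  have "1 \<in> S" using adm x unfolding S_def sh_admissible_def by auto
  define i where "i = Max S"
  have iS: "i \<in> S" using fin \<open>1\<in>S\<close> i_def Max_in by auto
  have imax: "\<forall>j\<in>S. j \<le> i" using fin i_def by auto
  have Qi: "?Q i"
  proof -
    have "sh_t P (i+1) < x"
    proof (cases "i + 1 \<le> sh_k P + 1")
      case True
      then have "i+1 \<notin> S" using imax by fastforce
      then show ?thesis using True iS unfolding S_def by auto
    next
      case False
      then have "i = sh_k P + 1" using iS unfolding S_def by auto
      then show ?thesis using adm x unfolding sh_admissible_def by auto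
    qed
    then show ?thesis using iS unfolding S_def by auto
  qed
  have uniq: "j = i" if Qj: "?Q j" for j
  proof (rule ccontr)
    assume "j \<noteq> i"
    then consider "j < i" | "i < j" by linarith
    then show False
    proof cases
      case 1
      have "sh_t P i \<le> sh_t P (j+1)" using t_le[OF adm, of "j+1" i] 1 Qi Qj by auto
      then show False using Qi Qj by auto
    next
      case 2
      have "sh_t P j \<le> sh_t P (i+1)" using t_le[OF adm, of "i+1" j] 2 Qi Qj by auto
      then show False using Qi Qj by auto
    qed
  qed
  have "sh_type P x = i" unfolding sh_type_def
    using Qi uniq by (intro the_equality) blast+
  then show ?thesis using Qi by simp
qed

lemma eps_props:
  assumes adm: "sh_admissible P"
  shows "0 < sh_eps P" "sh_eps P < 1"
proof -
  show "0 < sh_eps P" unfolding sh_eps_def using t_pos[OF adm, of "sh_k P + 1"] by simp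
  have "sh_k P \<ge> 1" using adm unfolding sh_admissible_def by auto
  then show "sh_eps P < 1" unfolding sh_eps_def using t_strict[OF adm, of 1 "sh_k P + 1"] adm
    unfolding sh_admissible_def by auto
qed

lemma beta_ge1:
  assumes adm: "sh_admissible P" and "1 \<le> i" "i \<le> sh_k P"
  shows "1 \<le> sh_beta P i"
proof -
  have tp: "0 < sh_t P i" using t_pos[OF adm, of i] assms by auto
  have "sh_t P i \<le> 1" using t_le1[OF adm, of i] assms by auto
  then have "1 \<le> 1 / sh_t P i" using tp by (simp add: field_simps)
  then have "1 \<le> \<lfloor>1 / sh_t P i\<rfloor>" by linarith
  then show ?thesis unfolding sh_beta_def by linarith
qed


definition inB :: "nat \<Rightarrow> label \<Rightarrow> bool" where
  "inB i l \<longleftrightarrow> l = BlueOnly i \<or> (\<exists>j. l = Mixed i j)"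
definition inR :: "nat \<Rightarrow> label \<Rightarrow> bool" where
  "inR j l \<longleftrightarrow> l = RedOnly j \<or> (\<exists>i. l = Mixed i j)"

lemma inB_simps[simp]:
  "inB i (BlueOnly i') \<longleftrightarrow> i = i'" "inB i (Mixed i' j) \<longleftrightarrow> i = i'"
  "\<not> inB i (RedOnly j)" "\<not> inB i (Single j)" "\<not> inB i Small"
  by (auto simp: inB_def)

lemma inR_simps[simp]:
  "inR j (RedOnly j') \<longleftrightarrow> j = j'" "inR j (Mixed i j') \<longleftrightarrow> j = j'"
  "\<not> inR j (BlueOnly i)" "\<not> inR j (Single i)" "\<not> inR j Small"
  by (auto simp: inR_def)

definition slack :: "(label \<Rightarrow> bool) \<Rightarrow> real \<Rightarrow> (bin \<Rightarrow> real) \<Rightarrow> bin list \<Rightarrow> real" where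
  "slack G cap c bs = sum_list (map (\<lambda>b. if G (fst b) then cap - c b else 0) bs)"

lemma slack_put:
  assumes n: "n < length bs" and inv: "slack G cap c bs \<le> cap"
    and mono: "c (bs ! n) \<le> c b'"
    and stay: "G (fst (bs ! n)) \<Longrightarrow> G (fst b')"
    and enter: "\<not> G (fst (bs ! n)) \<Longrightarrow> G (fst b') \<Longrightarrow> (\<forall>b\<in>set bs. G (fst b) \<longrightarrow> cap \<le> c b) \<and> 0 \<le> c b'"
  shows "slack G cap c (bs[n := b']) \<le> cap"
proof -
  let ?f = "\<lambda>b. if G (fst b) then cap - c b else 0"
  have eq: "slack G cap c (bs[n := b']) = slack G cap c bs - ?f (bs ! n) + ?f b'"
    unfolding slack_def using n by (rule sum_list_map_update)
  show ?thesis
  proof (cases "G (fst (bs ! n))")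
    case True then show ?thesis using eq inv mono stay by auto
  next
    case False
    show ?thesis
    proof (cases "G (fst b')")
      case True
      with False enter have full: "\<forall>b\<in>set bs. G (fst b) \<longrightarrow> cap \<le> c b" and "0 \<le> c b'" by auto
      have "slack G cap c bs \<le> 0" unfolding slack_def
        using full by (intro sum_list_nonpos) auto
      then show ?thesis using eq False True \<open>0 \<le> c b'\<close> by auto
    next
      case False2: False
      then show ?thesis using eq False inv by auto
    qed
  qed
qed

lemma slack_app:
  assumes inv: "slack G cap c bs \<le> cap"
    and enter: "G (fst b') \<Longrightarrow> (\<forall>b\<in>set bs. G (fst b) \<longrightarrow> cap \<le> c b) \<and> 0 \<le> c b'"
  shows "slack G cap c (bs @ [b']) \<le> cap"
proof (cases "G (fst b')")
  case True
  with enter have full: "\<forall>b\<in>set bs. G (fst b) \<longrightarrow> cap \<le> c b" and "0 \<le> c b'" by auto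
  have "slack G cap c bs \<le> 0" unfolding slack_def
    using full by (intro sum_list_nonpos) auto
  then show ?thesis using True \<open>0 \<le> c b'\<close> by (simp add: slack_def)
next
  case False
  then show ?thesis using inv by (simp add: slack_def)
qed

lemma cnt_snoc[simp]:
  "cnt P c i (lab, snd b @ [(x, c')]) = cnt P c i b + (if c' = c \<and> sh_type P x = i then 1 else 0)"
  by (simp add: cnt_def)

lemma cnt_single[simp]:
  "cnt P c i (lab, [(x, c')]) = (if c' = c \<and> sh_type P x = i then 1 else 0)"
  by (simp add: cnt_def)

lemma level_snoc[simp]: "level (lab, snd b @ [(x, c)]) = level b + x"
  by (simp add: level_def)

lemma level_single[simp]: "level (lab, [(x, c)]) = x"
  by (simp add: level_def)

definition TB :: "shparams \<Rightarrow> nat \<Rightarrow> bin list \<Rightarrow> real" where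
  "TB P i bs = sum_list (map (\<lambda>b. real (cnt P Blue i b)) bs)"
definition TR :: "shparams \<Rightarrow> nat \<Rightarrow> bin list \<Rightarrow> real" where
  "TR P i bs = sum_list (map (\<lambda>b. real (cnt P Red i b)) bs)"

lemma TB_put: "n < length bs \<Longrightarrow>
  TB P i (put bs n lab x c) = TB P i bs + (if c = Blue \<and> sh_type P x = i then 1 else 0)"
  unfolding TB_def put_def by (simp add: sum_list_map_update)
lemma TR_put: "n < length bs \<Longrightarrow>
  TR P i (put bs n lab x c) = TR P i bs + (if c = Red \<and> sh_type P x = i then 1 else 0)"
  unfolding TR_def put_def by (simp add: sum_list_map_update)
lemma TB_app: "TB P i (bs @ [(lab, [(x, c)])]) = TB P i bs + (if c = Blue \<and> sh_type P x = i then 1 else 0)"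
  unfolding TB_def by simp
lemma TR_app: "TR P i (bs @ [(lab, [(x, c)])]) = TR P i bs + (if c = Red \<and> sh_type P x = i then 1 else 0)"
  unfolding TR_def by simp

definition smF :: "bin list \<Rightarrow> bin list" where
  "smF bs = filter (\<lambda>b. fst b = Small) bs"
definition sig :: "bin list \<Rightarrow> real" where
  "sig bs = sum_list (map level (smF bs))"
definition lastlev :: "bin list \<Rightarrow> real" where
  "lastlev bs = (if smF bs = [] then 0 else level (last (smF bs)))"

definition labok :: "shparams \<Rightarrow> label \<Rightarrow> bool" where
  "labok P l = (case l of Single i \<Rightarrow> 1 \<le> i \<and> i \<le> sh_k P \<and> sh_phi P i = 0
     | BlueOnly i \<Rightarrow> 1 \<le> i \<and> i \<le> sh_k P \<and> sh_phi P i \<noteq> 0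
     | RedOnly j \<Rightarrow> 1 \<le> j \<and> j \<le> sh_k P \<and> 0 < sh_alpha P j
     | Mixed i j \<Rightarrow> 1 \<le> i \<and> i \<le> sh_k P \<and> sh_phi P i \<noteq> 0 \<and> 1 \<le> j \<and> j \<le> sh_k P \<and> 0 < sh_alpha P j
     | Small \<Rightarrow> True)"

definition nconf :: "shparams \<Rightarrow> label set \<Rightarrow> bool" where
  "nconf P A \<longleftrightarrow> (\<forall>i j. BlueOnly i \<in> A \<longrightarrow> RedOnly j \<in> A \<longrightarrow>
      \<not> (real (sh_gamma P j) * sh_t P j \<le> sh_Delta P (sh_phi P i)))"

lemma nconf_mono: "A \<subseteq> B \<Longrightarrow> nconf P B \<Longrightarrow> nconf P A"
  by (auto simp: nconf_def)

lemma nconf_insert_other: "nconf P A \<Longrightarrow> (\<forall>i. l \<noteq> BlueOnly i) \<Longrightarrow> (\<forall>j. l \<noteq> RedOnly j) \<Longrightarrow> nconf P (insert l A)"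
  by (auto simp: nconf_def)

definition Invb :: "shparams \<Rightarrow> bin list \<Rightarrow> bool" where
  "Invb P bs \<longleftrightarrow>
   (\<forall>i. slack (\<lambda>l. l = Single i) (real (sh_beta P i)) (\<lambda>b. real (cnt P Blue i b)) bs \<le> real (sh_beta P i)) \<and>
   (\<forall>i. slack (inB i) (real (sh_beta P i)) (\<lambda>b. real (cnt P Blue i b)) bs \<le> real (sh_beta P i)) \<and>
   (\<forall>i. slack (inR i) (real (sh_gamma P i)) (\<lambda>b. real (cnt P Red i b)) bs \<le> real (sh_gamma P i)) \<and>
   (\<forall>b\<in>set bs. labok P (fst b) \<and> 0 \<le> level b) \<and>
   nconf P (fst ` set bs) \<and>
   (real (length (smF bs)) - 1) * (1 - sh_eps P) + lastlev bs \<le> sig bs"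

lemma bins_put:
  assumes inv: "Invb P bs" and n: "n < length bs" and x: "0 < x"
    and sm: "fst (bs ! n) \<noteq> Small" "lab \<noteq> Small"
    and sg: "\<And>i. (fst (bs ! n) = Single i) = (lab = Single i)"
    and bst: "\<And>i. inB i (fst (bs ! n)) \<Longrightarrow> inB i lab"
    and ben: "\<And>i. inB i lab \<Longrightarrow> \<not> inB i (fst (bs ! n)) \<Longrightarrow> (\<forall>b\<in>set bs. inB i (fst b) \<longrightarrow> sh_beta P i \<le> cnt P Blue i b)"
    and rst: "\<And>i. inR i (fst (bs ! n)) \<Longrightarrow> inR i lab"
    and ren: "\<And>i. inR i lab \<Longrightarrow> \<not> inR i (fst (bs ! n)) \<Longrightarrow> (\<forall>b\<in>set bs. inR i (fst b) \<longrightarrow> sh_gamma P i \<le> cnt P Red i b)"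
    and lok: "labok P lab"
    and lb: "\<And>i. lab = BlueOnly i \<Longrightarrow> lab = fst (bs ! n)"
    and lr: "\<And>j. lab = RedOnly j \<Longrightarrow> lab = fst (bs ! n)"
  shows "Invb P (put bs n lab x c)"
proof -
  let ?b' = "(lab, snd (bs ! n) @ [(x, c)])"
  have put: "put bs n lab x c = bs[n := ?b']" unfolding put_def ..
  have I: "\<forall>i. slack (\<lambda>l. l = Single i) (real (sh_beta P i)) (\<lambda>b. real (cnt P Blue i b)) bs \<le> real (sh_beta P i)"
    "\<forall>i. slack (inB i) (real (sh_beta P i)) (\<lambda>b. real (cnt P Blue i b)) bs \<le> real (sh_beta P i)"
    "\<forall>i. slack (inR i) (real (sh_gamma P i)) (\<lambda>b. real (cnt P Red i b)) bs \<le> real (sh_gamma P i)"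
    "\<forall>b\<in>set bs. labok P (fst b) \<and> 0 \<le> level b"
    "nconf P (fst ` set bs)"
    "(real (length (smF bs)) - 1) * (1 - sh_eps P) + lastlev bs \<le> sig bs"
    using inv unfolding Invb_def by auto
  have S1: "slack (\<lambda>l. l = Single i) (real (sh_beta P i)) (\<lambda>b. real (cnt P Blue i b)) (bs[n := ?b']) \<le> real (sh_beta P i)" for i
    by (rule slack_put[OF n]) (use I(1) sg in auto)
  have S2: "slack (inB i) (real (sh_beta P i)) (\<lambda>b. real (cnt P Blue i b)) (bs[n := ?b']) \<le> real (sh_beta P i)" for i
    by (rule slack_put[OF n]) (use I(2) bst ben in auto)
  have S3: "slack (inR i) (real (sh_gamma P i)) (\<lambda>b. real (cnt P Red i b)) (bs[n := ?b']) \<le> real (sh_gamma P i)" for i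
    by (rule slack_put[OF n]) (use I(3) rst ren in auto)
  have nth: "bs ! n \<in> set bs" using n by simp
  have L: "\<forall>b\<in>set (bs[n := ?b']). labok P (fst b) \<and> 0 \<le> level b"
  proof
    fix b assume "b \<in> set (bs[n := ?b'])"
    then have "b = ?b' \<or> b \<in> set bs" using set_update_subset_insert by fastforce
    then show "labok P (fst b) \<and> 0 \<le> level b"
      using I(4) nth lok x by fastforce
  qed
  have sub: "fst ` set (bs[n := ?b']) \<subseteq> insert lab (fst ` set bs)"
    using set_update_subset_insert[of bs n ?b'] by auto
  have NC: "nconf P (fst ` set (bs[n := ?b']))"
  proof (cases "(\<exists>i. lab = BlueOnly i) \<or> (\<exists>j. lab = RedOnly j)")
    case True
    then have "lab \<in> fst ` set bs" using lb lr nth by force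
    then have "insert lab (fst ` set bs) = fst ` set bs" by blast
    then show ?thesis using nconf_mono[OF sub] I(5) by simp
  next
    case False
    then show ?thesis using nconf_mono[OF sub nconf_insert_other[OF I(5)]] by auto
  qed
  have smeq: "smF (bs[n := ?b']) = smF bs" unfolding smF_def
    by (rule filter_update_notP) (use sm in auto)
  have "sig (bs[n := ?b']) = sig bs" "lastlev (bs[n := ?b']) = lastlev bs"
    by (simp_all only: sig_def lastlev_def smeq)
  then show ?thesis unfolding put Invb_def
    using S1 S2 S3 L NC I(6) smeq by simp
qed

lemma bins_app:
  assumes inv: "Invb P bs" and x: "0 < x"
    and sm: "lab \<noteq> Small"
    and sen: "\<And>i. lab = Single i \<Longrightarrow> (\<forall>b\<in>set bs. fst b = Single i \<longrightarrow> sh_beta P i \<le> cnt P Blue i b)"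
    and ben: "\<And>i. inB i lab \<Longrightarrow> (\<forall>b\<in>set bs. inB i (fst b) \<longrightarrow> sh_beta P i \<le> cnt P Blue i b)"
    and ren: "\<And>i. inR i lab \<Longrightarrow> (\<forall>b\<in>set bs. inR i (fst b) \<longrightarrow> sh_gamma P i \<le> cnt P Red i b)"
    and lok: "labok P lab"
    and nc: "nconf P (insert lab (fst ` set bs))"
  shows "Invb P (bs @ [(lab, [(x, c)])])"
proof -
  have I: "\<forall>i. slack (\<lambda>l. l = Single i) (real (sh_beta P i)) (\<lambda>b. real (cnt P Blue i b)) bs \<le> real (sh_beta P i)"
    "\<forall>i. slack (inB i) (real (sh_beta P i)) (\<lambda>b. real (cnt P Blue i b)) bs \<le> real (sh_beta P i)"
    "\<forall>i. slack (inR i) (real (sh_gamma P i)) (\<lambda>b. real (cnt P Red i b)) bs \<le> real (sh_gamma P i)"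
    "\<forall>b\<in>set bs. labok P (fst b) \<and> 0 \<le> level b"
    "nconf P (fst ` set bs)"
    "(real (length (smF bs)) - 1) * (1 - sh_eps P) + lastlev bs \<le> sig bs"
    using inv unfolding Invb_def by auto
  have S1: "slack (\<lambda>l. l = Single i) (real (sh_beta P i)) (\<lambda>b. real (cnt P Blue i b)) (bs @ [(lab, [(x, c)])]) \<le> real (sh_beta P i)" for i
    by (rule slack_app) (use I(1) sen in auto)
  have S2: "slack (inB i) (real (sh_beta P i)) (\<lambda>b. real (cnt P Blue i b)) (bs @ [(lab, [(x, c)])]) \<le> real (sh_beta P i)" for i
    by (rule slack_app) (use I(2) ben in auto)
  have S3: "slack (inR i) (real (sh_gamma P i)) (\<lambda>b. real (cnt P Red i b)) (bs @ [(lab, [(x, c)])]) \<le> real (sh_gamma P i)" for i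
    by (rule slack_app) (use I(3) ren in auto)
  have smeq: "smF (bs @ [(lab, [(x, c)])]) = smF bs" unfolding smF_def using sm by simp
  have "sig (bs @ [(lab, [(x, c)])]) = sig bs" "lastlev (bs @ [(lab, [(x, c)])]) = lastlev bs"
    by (simp_all only: sig_def lastlev_def smeq)
  then show ?thesis unfolding Invb_def
    using S1 S2 S3 I(4,6) nc x lok smeq by simp
qed


lemma last_small:
  assumes "smF bs \<noteq> []"
  shows "\<exists>n<length bs. fst (bs ! n) = Small \<and> (\<forall>m. n < m \<and> m < length bs \<longrightarrow> fst (bs ! m) \<noteq> Small)
           \<and> last (smF bs) = bs ! n"
  using assms
proof (induction bs rule: rev_induct)
  case Nil then show ?case by (simp add: smF_def)
next
  case (snoc b bs)
  show ?case
  proof (cases "fst b = Small")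
    case True
    then show ?thesis by (intro exI[of _ "length bs"]) (auto simp: smF_def nth_append)
  next
    case False
    then have "smF bs \<noteq> []" "smF (bs @ [b]) = smF bs" using snoc.prems by (auto simp: smF_def)
    then obtain n where n: "n<length bs" "fst (bs ! n) = Small" "\<forall>m. n < m \<and> m < length bs \<longrightarrow> fst (bs ! m) \<noteq> Small"
      "last (smF bs) = bs ! n" using snoc.IH by blast
    show ?thesis
    proof (intro exI[of _ n] conjI allI impI)
      show "n < length (bs @ [b])" using n by simp
      show "fst ((bs @ [b]) ! n) = Small" using n by (simp add: nth_append)
      show "last (smF (bs @ [b])) = (bs @ [b]) ! n" using n \<open>smF (bs @ [b]) = smF bs\<close> by (simp add: nth_append)
    next
      fix m assume "n < m \<and> m < length (bs @ [b])"
      then show "fst ((bs @ [b]) ! m) \<noteq> Small" using n False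
        by (cases "m < length bs") (auto simp: nth_append)
    qed
  qed
qed

lemma bins_nf_fit:
  assumes inv: "Invb P bs" and n: "n < length bs" and x: "0 < x"
    and sm: "fst (bs ! n) = Small"
    and lastn: "\<forall>m. n < m \<and> m < length bs \<longrightarrow> fst (bs ! m) \<noteq> Small"
  shows "Invb P (put bs n Small x c) \<and> sig (put bs n Small x c) = sig bs + x"
proof -
  let ?b' = "(Small, snd (bs ! n) @ [(x, c)])"
  have put: "put bs n Small x c = bs[n := ?b']" unfolding put_def ..
  have I: "\<forall>i. slack (\<lambda>l. l = Single i) (real (sh_beta P i)) (\<lambda>b. real (cnt P Blue i b)) bs \<le> real (sh_beta P i)"
    "\<forall>i. slack (inB i) (real (sh_beta P i)) (\<lambda>b. real (cnt P Blue i b)) bs \<le> real (sh_beta P i)"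
    "\<forall>i. slack (inR i) (real (sh_gamma P i)) (\<lambda>b. real (cnt P Red i b)) bs \<le> real (sh_gamma P i)"
    "\<forall>b\<in>set bs. labok P (fst b) \<and> 0 \<le> level b"
    "nconf P (fst ` set bs)"
    "(real (length (smF bs)) - 1) * (1 - sh_eps P) + lastlev bs \<le> sig bs"
    using inv unfolding Invb_def by auto
  have S1: "slack (\<lambda>l. l = Single i) (real (sh_beta P i)) (\<lambda>b. real (cnt P Blue i b)) (bs[n := ?b']) \<le> real (sh_beta P i)" for i
    by (rule slack_put[OF n]) (use I(1) sm in auto)
  have S2: "slack (inB i) (real (sh_beta P i)) (\<lambda>b. real (cnt P Blue i b)) (bs[n := ?b']) \<le> real (sh_beta P i)" for i
    by (rule slack_put[OF n]) (use I(2) sm in auto)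
  have S3: "slack (inR i) (real (sh_gamma P i)) (\<lambda>b. real (cnt P Red i b)) (bs[n := ?b']) \<le> real (sh_gamma P i)" for i
    by (rule slack_put[OF n]) (use I(3) sm in auto)
  have nth: "bs ! n \<in> set bs" using n by simp
  have L: "\<forall>b\<in>set (bs[n := ?b']). labok P (fst b) \<and> 0 \<le> level b"
  proof
    fix b assume "b \<in> set (bs[n := ?b'])"
    then have "b = ?b' \<or> b \<in> set bs" using set_update_subset_insert by fastforce
    then show "labok P (fst b) \<and> 0 \<le> level b"
      using I(4) nth x by (fastforce simp: labok_def)
  qed
  have sub: "fst ` set (bs[n := ?b']) \<subseteq> insert Small (fst ` set bs)"
    using set_update_subset_insert[of bs n ?b'] by auto
  have NC: "nconf P (fst ` set (bs[n := ?b']))"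
    using nconf_mono[OF sub nconf_insert_other[OF I(5)]] by auto
  have dr: "filter (\<lambda>b. fst b = Small) (drop (Suc n) bs) = []"
  proof -
    have "\<forall>y\<in>set (drop (Suc n) bs). fst y \<noteq> Small"
    proof
      fix y assume "y \<in> set (drop (Suc n) bs)"
      then obtain j where "j < length (drop (Suc n) bs)" "y = drop (Suc n) bs ! j"
        by (auto simp: in_set_conv_nth)
      then show "fst y \<noteq> Small" using lastn by auto
    qed
    then show ?thesis by (simp add: filter_empty_conv)
  qed
  define pre where "pre = smF (take n bs)"
  have old: "smF bs = pre @ [bs ! n]"
    using id_take_nth_drop[OF n] dr sm unfolding pre_def smF_def
    by (metis (mono_tags, lifting) append.right_neutral filter.simps(2) filter_append)
  have new: "smF (bs[n := ?b']) = pre @ [?b']"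
    using upd_conv_take_nth_drop[OF n, of ?b'] dr unfolding pre_def smF_def by simp
  have "(real (length (smF (bs[n := ?b']))) - 1) * (1 - sh_eps P) + lastlev (bs[n := ?b']) \<le> sig (bs[n := ?b'])"
    using I(6) unfolding sig_def lastlev_def old new by simp
  moreover have "sig (bs[n := ?b']) = sig bs + x" unfolding sig_def old new by simp
  ultimately show ?thesis unfolding put Invb_def
    using S1 S2 S3 L NC by simp
qed

lemma bins_nf_new:
  assumes adm: "sh_admissible P" and inv: "Invb P bs" and x: "0 < x" "x \<le> sh_eps P"
    and full: "\<forall>n. n < length bs \<and> fst (bs ! n) = Small \<and>
            (\<forall>m. n < m \<and> m < length bs \<longrightarrow> fst (bs ! m) \<noteq> Small) \<longrightarrow>
            level (bs ! n) + x > 1"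
  shows "Invb P (bs @ [(Small, [(x, c)])])"
proof -
  have I: "\<forall>i. slack (\<lambda>l. l = Single i) (real (sh_beta P i)) (\<lambda>b. real (cnt P Blue i b)) bs \<le> real (sh_beta P i)"
    "\<forall>i. slack (inB i) (real (sh_beta P i)) (\<lambda>b. real (cnt P Blue i b)) bs \<le> real (sh_beta P i)"
    "\<forall>i. slack (inR i) (real (sh_gamma P i)) (\<lambda>b. real (cnt P Red i b)) bs \<le> real (sh_gamma P i)"
    "\<forall>b\<in>set bs. labok P (fst b) \<and> 0 \<le> level b"
    "nconf P (fst ` set bs)"
    "(real (length (smF bs)) - 1) * (1 - sh_eps P) + lastlev bs \<le> sig bs"
    using inv unfolding Invb_def by auto
  let ?bs' = "bs @ [(Small, [(x, c)])]"
  have S1: "slack (\<lambda>l. l = Single i) (real (sh_beta P i)) (\<lambda>b. real (cnt P Blue i b)) ?bs' \<le> real (sh_beta P i)" for i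
    by (rule slack_app) (use I(1) in auto)
  have S2: "slack (inB i) (real (sh_beta P i)) (\<lambda>b. real (cnt P Blue i b)) ?bs' \<le> real (sh_beta P i)" for i
    by (rule slack_app) (use I(2) in auto)
  have S3: "slack (inR i) (real (sh_gamma P i)) (\<lambda>b. real (cnt P Red i b)) ?bs' \<le> real (sh_gamma P i)" for i
    by (rule slack_app) (use I(3) in auto)
  have NC: "nconf P (fst ` set ?bs')"
    using nconf_insert_other[OF I(5), of Small] by simp
  have new: "smF ?bs' = smF bs @ [(Small, [(x, c)])]" by (simp add: smF_def)
  have key: "real (length (smF bs)) * (1 - sh_eps P) \<le> sig bs"
  proof (cases "smF bs = []")
    case True then show ?thesis by (simp add: sig_def)
  next
    case False
    obtain n where n: "n<length bs" "fst (bs ! n) = Small" "\<forall>m. n < m \<and> m < length bs \<longrightarrow> fst (bs ! m) \<noteq> Small"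
      "last (smF bs) = bs ! n" using last_small[OF False] by blast
    have "level (bs ! n) + x > 1" using full n by blast
    then have "lastlev bs > 1 - sh_eps P" using False n x by (simp add: lastlev_def)
    then show ?thesis using I(6) by (simp add: algebra_simps)
  qed
  have "(real (length (smF ?bs')) - 1) * (1 - sh_eps P) + lastlev ?bs' \<le> sig ?bs'"
    using key unfolding new sig_def lastlev_def by simp
  then show ?thesis unfolding Invb_def
    using S1 S2 S3 I(4) x NC by (simp add: labok_def)
qed


lemma sig_put_other: "n < length bs \<Longrightarrow> fst (bs ! n) \<noteq> Small \<Longrightarrow> lab \<noteq> Small \<Longrightarrow> sig (put bs n lab x c) = sig bs"
  unfolding sig_def smF_def put_def by (subst filter_update_notP) auto

lemma sig_app: "sig (bs @ [(lab, [(x, c)])]) = sig bs + (if lab = Small then x else 0)"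
  unfolding sig_def smF_def by simp

lemma ex_nth_conv: "(\<exists>n<length xs. Q (xs ! n)) = (\<exists>y\<in>set xs. Q y)"
  by (metis in_set_conv_nth)

lemma ex_nth_conv2: "(\<exists>n<length xs. \<exists>j. Q j (xs ! n)) = (\<exists>y\<in>set xs. \<exists>j. Q j y)"
  by (metis in_set_conv_nth)

definition Invc :: "shparams \<Rightarrow> bin list \<Rightarrow> (nat \<Rightarrow> nat) \<Rightarrow> (nat \<Rightarrow> nat) \<Rightarrow> bool" where
  "Invc P bs s e \<longleftrightarrow> (\<forall>i\<in>{1..sh_k P}. TR P i bs = real (e i) \<and> TB P i bs + real (e i) = real (s i)
      \<and> e i = nat \<lfloor>sh_alpha P i * real (s i)\<rfloor>)"

lemma red_e:
  fixes a :: real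
  assumes "0 \<le> a" "a \<le> 1" "e = nat \<lfloor>a * real s\<rfloor>" "e < nat \<lfloor>a * real (Suc s)\<rfloor>"
  shows "Suc e = nat \<lfloor>a * real (Suc s)\<rfloor>"
proof -
  have "a * real (Suc s) \<le> a * real s + 1" using assms by (simp add: algebra_simps)
  then have "\<lfloor>a * real (Suc s)\<rfloor> \<le> \<lfloor>a * real s\<rfloor> + 1" by linarith
  moreover have "0 \<le> \<lfloor>a * real s\<rfloor>" using assms by simp
  ultimately show ?thesis using assms by linarith
qed

lemma blue_e:
  fixes a :: real
  assumes "0 \<le> a" "e = nat \<lfloor>a * real s\<rfloor>" "\<not> e < nat \<lfloor>a * real (Suc s)\<rfloor>"
  shows "e = nat \<lfloor>a * real (Suc s)\<rfloor>"
proof -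
  have "a * real s \<le> a * real (Suc s)" using assms by (simp add: mult_left_mono)
  then have "\<lfloor>a * real s\<rfloor> \<le> \<lfloor>a * real (Suc s)\<rfloor>" by (rule floor_mono)
  then show ?thesis using assms by linarith
qed

lemma red_alpha_pos:
  fixes a :: real
  assumes "e < nat \<lfloor>a * real (Suc s)\<rfloor>"
  shows "0 < a"
proof (rule ccontr)
  assume "\<not> 0 < a"
  then have "a * real (Suc s) \<le> 0" by (simp add: mult_nonpos_nonneg)
  then show False using assms by linarith
qed

lemma counters_red:
  assumes adm: "sh_admissible P" and ic: "Invc P bs s e" and i: "1 \<le> i" "i \<le> sh_k P"
    and cond: "e i < nat \<lfloor>sh_alpha P i * real (Suc (s i))\<rfloor>"
    and tb: "\<And>j. TB P j bs' = TB P j bs"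
    and tr: "\<And>j. TR P j bs' = TR P j bs + (if i = j then 1 else 0)"
  shows "Invc P bs' (s(i := Suc (s i))) (e(i := Suc (e i)))"
proof -
  have a: "0 \<le> sh_alpha P i" "sh_alpha P i \<le> 1" using adm i unfolding sh_admissible_def by auto
  have ei0: "TR P i bs = real (e i) \<and> TB P i bs + real (e i) = real (s i) \<and> e i = nat \<lfloor>sh_alpha P i * real (s i)\<rfloor>"
    using ic i unfolding Invc_def by (meson atLeastAtMost_iff)
  then have ei: "e i = nat \<lfloor>sh_alpha P i * real (s i)\<rfloor>" "TR P i bs = real (e i)" "TB P i bs + real (e i) = real (s i)"
    by blast+
  have new: "Suc (e i) = nat \<lfloor>sh_alpha P i * real (Suc (s i))\<rfloor>" using red_e[OF a ei(1) cond] .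
  show ?thesis unfolding Invc_def
  proof (intro ballI)
    fix j assume j: "j \<in> {1..sh_k P}"
    show "TR P j bs' = real ((e(i := Suc (e i))) j) \<and> TB P j bs' + real ((e(i := Suc (e i))) j) = real ((s(i := Suc (s i))) j) \<and>
          (e(i := Suc (e i))) j = nat \<lfloor>sh_alpha P j * real ((s(i := Suc (s i))) j)\<rfloor>"
    proof (cases "j = i")
      case True then show ?thesis using ei(2,3) new tb tr by simp
    next
      case False
      have h: "TR P j bs = real (e j) \<and> TB P j bs + real (e j) = real (s j) \<and> e j = nat \<lfloor>sh_alpha P j * real (s j)\<rfloor>"
        using ic j unfolding Invc_def by (meson atLeastAtMost_iff)
      then show ?thesis using False tb tr by simp
    qed
  qed
qed

lemma counters_blue:
  assumes adm: "sh_admissible P" and ic: "Invc P bs s e" and i: "1 \<le> i" "i \<le> sh_k P"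
    and cond: "\<not> e i < nat \<lfloor>sh_alpha P i * real (Suc (s i))\<rfloor>"
    and tb: "\<And>j. TB P j bs' = TB P j bs + (if i = j then 1 else 0)"
    and tr: "\<And>j. TR P j bs' = TR P j bs"
  shows "Invc P bs' (s(i := Suc (s i))) e"
proof -
  have a: "0 \<le> sh_alpha P i" using adm i unfolding sh_admissible_def by auto
  have ei0: "TR P i bs = real (e i) \<and> TB P i bs + real (e i) = real (s i) \<and> e i = nat \<lfloor>sh_alpha P i * real (s i)\<rfloor>"
    using ic i unfolding Invc_def by (meson atLeastAtMost_iff)
  then have ei: "e i = nat \<lfloor>sh_alpha P i * real (s i)\<rfloor>" "TR P i bs = real (e i)" "TB P i bs + real (e i) = real (s i)"
    by blast+
  have new: "e i = nat \<lfloor>sh_alpha P i * real (Suc (s i))\<rfloor>" using blue_e[OF a ei(1) cond] .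
  show ?thesis unfolding Invc_def
  proof (intro ballI)
    fix j assume j: "j \<in> {1..sh_k P}"
    show "TR P j bs' = real (e j) \<and> TB P j bs' + real (e j) = real ((s(i := Suc (s i))) j) \<and>
          e j = nat \<lfloor>sh_alpha P j * real ((s(i := Suc (s i))) j)\<rfloor>"
    proof (cases "j = i")
      case True then show ?thesis using ei(2,3) new tb tr by simp
    next
      case False
      have h: "TR P j bs = real (e j) \<and> TB P j bs + real (e j) = real (s j) \<and> e j = nat \<lfloor>sh_alpha P j * real (s j)\<rfloor>"
        using ic j unfolding Invc_def by (meson atLeastAtMost_iff)
      then show ?thesis using False tb tr by simp
    qed
  qed
qed

lemma counters_nf:
  assumes ic: "Invc P bs s e"
    and tb: "\<And>j. j \<le> sh_k P \<Longrightarrow> TB P j bs' = TB P j bs"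
    and tr: "\<And>j. j \<le> sh_k P \<Longrightarrow> TR P j bs' = TR P j bs"
  shows "Invc P bs' s e"
  using ic tb tr unfolding Invc_def by auto


lemma full_from_nth:
  assumes "\<And>m. m < length bs \<Longrightarrow> G (fst (bs ! m)) \<Longrightarrow> c \<le> f (bs ! m)"
  shows "\<forall>b\<in>set bs. G (fst b) \<longrightarrow> c \<le> f b"
  using assms by (metis in_set_conv_nth)

lemma img_from_nth:
  assumes "\<And>m. m < length bs \<Longrightarrow> R (fst (bs ! m))"
  shows "\<forall>l\<in>fst ` set bs. R l"
  using assms by (metis (no_types, lifting) image_iff in_set_conv_nth)

lemma nconf_insert_red:
  "nconf P A \<Longrightarrow> (\<forall>l\<in>A. \<forall>j'. l = BlueOnly j' \<longrightarrow> \<not> (real (sh_gamma P i) * sh_t P i \<le> sh_Delta P (sh_phi P j')))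
   \<Longrightarrow> nconf P (insert (RedOnly i) A)"
  by (auto simp: nconf_def)

lemma nconf_insert_blue:
  "nconf P A \<Longrightarrow> (\<forall>l\<in>A. \<forall>j'. l = RedOnly j' \<longrightarrow> \<not> (real (sh_gamma P j') * sh_t P j' \<le> sh_Delta P (sh_phi P i)))
   \<Longrightarrow> nconf P (insert (BlueOnly i) A)"
  by (auto simp: nconf_def)

lemma Invb_labok: "Invb P bs \<Longrightarrow> b \<in> set bs \<Longrightarrow> labok P (fst b)"
  unfolding Invb_def by auto

lemma Invb_nconf: "Invb P bs \<Longrightarrow> nconf P (fst ` set bs)"
  unfolding Invb_def by auto

definition Inv :: "shparams \<Rightarrow> state \<Rightarrow> bool" where
  "Inv P st \<longleftrightarrow> Invb P (fst st) \<and> Invc P (fst st) (fst (snd st)) (snd (snd st))"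

lemma step_inv:
  assumes adm: "sh_admissible P"
    and st: "sh_step P st x st'"
    and x: "0 < x" "x \<le> 1"
    and inv: "Inv P st"
  shows "Inv P st' \<and> sig (fst st') = sig (fst st) + (if sh_type P x = sh_k P + 1 then x else 0)
         \<and> (\<forall>i\<le>sh_k P. fst (snd st') i = fst (snd st) i + (if sh_type P x = i then 1 else 0))"
proof -
  have tp: "1 \<le> sh_type P x" "sh_type P x \<le> sh_k P + 1" "x \<le> sh_t P (sh_type P x)"
    using type_props[OF adm x] by auto
  show ?thesis
  using st
  proof (cases rule: sh_step.cases)
    case (nf_fit n bs s e)
    have ib: "Invb P bs" and ic: "Invc P bs s e" using inv nf_fit(1) unfolding Inv_def by auto
    have B: "Invb P (put bs n Small x Blue) \<and> sig (put bs n Small x Blue) = sig bs + x"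
      by (rule bins_nf_fit[OF ib nf_fit(4) x(1) nf_fit(5,6)])
    have C: "Invc P (put bs n Small x Blue) s e"
      by (rule counters_nf[OF ic]) (use nf_fit(3,4) in \<open>auto simp: TB_put TR_put\<close>)
    show ?thesis unfolding nf_fit(1,2) Inv_def using B C nf_fit(3) by auto
  next
    case (nf_new bs s e)
    have ib: "Invb P bs" and ic: "Invc P bs s e" using inv nf_new(1) unfolding Inv_def by auto
    have xe: "x \<le> sh_eps P" using tp nf_new(3) unfolding sh_eps_def by simp
    have B: "Invb P (bs @ [(Small, [(x, Blue)])])"
      by (rule bins_nf_new[OF adm ib x(1) xe nf_new(4)])
    have C: "Invc P (bs @ [(Small, [(x, Blue)])]) s e"
      by (rule counters_nf[OF ic]) (use nf_new(3) in \<open>auto simp: TB_app TR_app\<close>)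
    show ?thesis unfolding nf_new(1,2) Inv_def using B C nf_new(3) by (auto simp: sig_app)
  next
    case (red1 i s2 s e n bs)
    have ib: "Invb P bs" and ic: "Invc P bs s e" using inv red1(1) unfolding Inv_def by auto
    have i1: "1 \<le> i" using tp red1(3) by simp
    have old: "labok P (fst (bs ! n))" using Invb_labok[OF ib] red1(7) by simp
    have B: "Invb P (put bs n (RedOnly i) x Red)"
      by (rule bins_put[OF ib red1(7) x(1)]) (use red1(8) old in auto)
    have C: "Invc P (put bs n (RedOnly i) x Red) (s(i := Suc (s i))) (e(i := Suc (e i)))"
      by (rule counters_red[OF adm ic i1 red1(4)]) (use red1(3,5,6,7) in \<open>auto simp: TB_put TR_put\<close>)
    show ?thesis unfolding red1(1,2) Inv_def using B C red1(3,4,5,7,8) by (auto simp: sig_put_other)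
  next
    case (red2 i s2 s e bs n j)
    have ib: "Invb P bs" and ic: "Invc P bs s e" using inv red2(1) unfolding Inv_def by auto
    have i1: "1 \<le> i" using tp red2(3) by simp
    have old: "labok P (fst (bs ! n))" using Invb_labok[OF ib] red2(8) by simp
    have B: "Invb P (put bs n (Mixed j i) x Red)"
      by (rule bins_put[OF ib red2(8) x(1)]) (use red2(9) old in auto)
    have C: "Invc P (put bs n (Mixed j i) x Red) (s(i := Suc (s i))) (e(i := Suc (e i)))"
      by (rule counters_red[OF adm ic i1 red2(4)]) (use red2(3,5,6,8) in \<open>auto simp: TB_put TR_put\<close>)
    show ?thesis unfolding red2(1,2) Inv_def using B C red2(3,4,5,8,9) by (auto simp: sig_put_other)
  next
    case (red3 i s2 s e bs n j)
    have ib: "Invb P bs" and ic: "Invc P bs s e" using inv red3(1) unfolding Inv_def by auto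
    have i1: "1 \<le> i" using tp red3(3) by simp
    have old: "labok P (fst (bs ! n))" using Invb_labok[OF ib] red3(9) by simp
    have apos: "0 < sh_alpha P i" using red3(5,6) red_alpha_pos by simp
    have full: "\<forall>b\<in>set bs. inR i (fst b) \<longrightarrow> sh_gamma P i \<le> cnt P Red i b"
      by (rule full_from_nth) (use red3(7,8) in \<open>fastforce simp: inR_def not_less\<close>)
    have B: "Invb P (put bs n (Mixed j i) x Red)"
      by (rule bins_put[OF ib red3(9) x(1)]) (use red3(10) old full i1 red3(4) apos in \<open>auto simp: labok_def\<close>)
    have C: "Invc P (put bs n (Mixed j i) x Red) (s(i := Suc (s i))) (e(i := Suc (e i)))"
      by (rule counters_red[OF adm ic i1 red3(4)]) (use red3(3,5,6,9) in \<open>auto simp: TB_put TR_put\<close>)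
    show ?thesis unfolding red3(1,2) Inv_def using B C red3(3,4,5,9,10) by (auto simp: sig_put_other)
  next
    case (red4 i s2 s e bs)
    have ib: "Invb P bs" and ic: "Invc P bs s e" using inv red4(1) unfolding Inv_def by auto
    have i1: "1 \<le> i" using tp red4(3) by simp
    have apos: "0 < sh_alpha P i" using red4(5,6) red_alpha_pos by simp
    have full: "\<forall>b\<in>set bs. inR i (fst b) \<longrightarrow> sh_gamma P i \<le> cnt P Red i b"
      by (rule full_from_nth) (use red4(7,8) in \<open>fastforce simp: inR_def not_less\<close>)
    have nc: "nconf P (insert (RedOnly i) (fst ` set bs))"
      by (rule nconf_insert_red[OF Invb_nconf[OF ib]]) (rule img_from_nth, use red4(9) in auto)
    have B: "Invb P (bs @ [(RedOnly i, [(x, Red)])])"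
      by (rule bins_app[OF ib x(1)]) (use full i1 red4(4) apos nc in \<open>auto simp: labok_def\<close>)
    have C: "Invc P (bs @ [(RedOnly i, [(x, Red)])]) (s(i := Suc (s i))) (e(i := Suc (e i)))"
      by (rule counters_red[OF adm ic i1 red4(4)]) (use red4(3,5,6) in \<open>auto simp: TB_app TR_app\<close>)
    show ?thesis unfolding red4(1,2) Inv_def using B C red4(3,4,5) by (auto simp: sig_app)
  next
    case (blue1 i s2 s e n bs)
    have ib: "Invb P bs" and ic: "Invc P bs s e" using inv blue1(1) unfolding Inv_def by auto
    have i1: "1 \<le> i" using tp blue1(3) by simp
    have old: "labok P (fst (bs ! n))" using Invb_labok[OF ib] blue1(8) by simp
    have B: "Invb P (put bs n (Single i) x Blue)"
      by (rule bins_put[OF ib blue1(8) x(1)]) (use blue1(9) old in auto)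
    have C: "Invc P (put bs n (Single i) x Blue) (s(i := Suc (s i))) e"
      by (rule counters_blue[OF adm ic i1 blue1(4)]) (use blue1(3,5,6,8) in \<open>auto simp: TB_put TR_put\<close>)
    show ?thesis unfolding blue1(1,2) Inv_def using B C blue1(3,4,5,8,9) by (auto simp: sig_put_other)
  next
    case (blue2 i s2 s e bs)
    have ib: "Invb P bs" and ic: "Invc P bs s e" using inv blue2(1) unfolding Inv_def by auto
    have i1: "1 \<le> i" using tp blue2(3) by simp
    have full: "\<forall>b\<in>set bs. fst b = Single i \<longrightarrow> sh_beta P i \<le> cnt P Blue i b"
      by (rule full_from_nth) (use blue2(8) in \<open>auto simp: not_less\<close>)
    have nc: "nconf P (insert (Single i) (fst ` set bs))"
      by (rule nconf_insert_other[OF Invb_nconf[OF ib]]) auto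
    have B: "Invb P (bs @ [(Single i, [(x, Blue)])])"
      by (rule bins_app[OF ib x(1)]) (use full i1 blue2(4,7) nc in \<open>auto simp: labok_def\<close>)
    have C: "Invc P (bs @ [(Single i, [(x, Blue)])]) (s(i := Suc (s i))) e"
      by (rule counters_blue[OF adm ic i1 blue2(4)]) (use blue2(3,5,6) in \<open>auto simp: TB_app TR_app\<close>)
    show ?thesis unfolding blue2(1,2) Inv_def using B C blue2(3,4,5) by (auto simp: sig_app)
  next
    case (blue3 i s2 s e n bs)
    have ib: "Invb P bs" and ic: "Invc P bs s e" using inv blue3(1) unfolding Inv_def by auto
    have i1: "1 \<le> i" using tp blue3(3) by simp
    have old: "labok P (fst (bs ! n))" using Invb_labok[OF ib] blue3(8) by simp
    have ns: "fst (bs ! n) \<noteq> Small" using blue3(9) by auto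
    have B: "Invb P (put bs n (fst (bs ! n)) x Blue)"
      by (rule bins_put[OF ib blue3(8) x(1) ns ns]) (use old in auto)
    have C: "Invc P (put bs n (fst (bs ! n)) x Blue) (s(i := Suc (s i))) e"
      by (rule counters_blue[OF adm ic i1 blue3(4)]) (use blue3(3,5,6,8) in \<open>auto simp: TB_put TR_put\<close>)
    show ?thesis unfolding blue3(1,2) Inv_def using B C blue3(3,4,5,8) ns by (auto simp: sig_put_other)
  next
    case (blue4 i s2 s e bs n j)
    have ib: "Invb P bs" and ic: "Invc P bs s e" using inv blue4(1) unfolding Inv_def by auto
    have i1: "1 \<le> i" using tp blue4(3) by simp
    have old: "labok P (fst (bs ! n))" using Invb_labok[OF ib] blue4(9) by simp
    have full: "\<forall>b\<in>set bs. inB i (fst b) \<longrightarrow> sh_beta P i \<le> cnt P Blue i b"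
      by (rule full_from_nth) (use blue4(8) in \<open>fastforce simp: inB_def not_less\<close>)
    have B: "Invb P (put bs n (Mixed i j) x Blue)"
      by (rule bins_put[OF ib blue4(9) x(1)]) (use blue4(10) old full i1 blue4(4,7) in \<open>auto simp: labok_def\<close>)
    have C: "Invc P (put bs n (Mixed i j) x Blue) (s(i := Suc (s i))) e"
      by (rule counters_blue[OF adm ic i1 blue4(4)]) (use blue4(3,5,6,9) in \<open>auto simp: TB_put TR_put\<close>)
    show ?thesis unfolding blue4(1,2) Inv_def using B C blue4(3,4,5,9,10) by (auto simp: sig_put_other)
  next
    case (blue5 i s2 s e bs)
    have ib: "Invb P bs" and ic: "Invc P bs s e" using inv blue5(1) unfolding Inv_def by auto
    have i1: "1 \<le> i" using tp blue5(3) by simp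
    have full: "\<forall>b\<in>set bs. inB i (fst b) \<longrightarrow> sh_beta P i \<le> cnt P Blue i b"
      by (rule full_from_nth) (use blue5(8) in \<open>fastforce simp: inB_def not_less\<close>)
    have nc: "nconf P (insert (BlueOnly i) (fst ` set bs))"
      by (rule nconf_insert_blue[OF Invb_nconf[OF ib]]) (rule img_from_nth, use blue5(9) in auto)
    have B: "Invb P (bs @ [(BlueOnly i, [(x, Blue)])])"
      by (rule bins_app[OF ib x(1)]) (use full i1 blue5(4,7) nc in \<open>auto simp: labok_def\<close>)
    have C: "Invc P (bs @ [(BlueOnly i, [(x, Blue)])]) (s(i := Suc (s i))) e"
      by (rule counters_blue[OF adm ic i1 blue5(4)]) (use blue5(3,5,6) in \<open>auto simp: TB_app TR_app\<close>)
    show ?thesis unfolding blue5(1,2) Inv_def using B C blue5(3,4,5) by (auto simp: sig_app)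
  qed
qed


lemma Inv_init: "sh_admissible P \<Longrightarrow> Inv P sh_init"
proof -
  assume adm: "sh_admissible P"
  have b: "Invb P []" unfolding Invb_def using eps_props[OF adm] by (simp add: slack_def smF_def sig_def lastlev_def nconf_def)
  have c: "Invc P [] (\<lambda>_. 0) (\<lambda>_. 0)" unfolding Invc_def by (simp add: TB_def TR_def)
  show ?thesis unfolding Inv_def sh_init_def using b c by simp
qed

lemma exec_inv:
  assumes "sh_exec P st L st'" and adm: "sh_admissible P"
    and "\<forall>x\<in>set L. 0 < x \<and> x \<le> 1" and "Inv P st"
  shows "Inv P st' \<and> sig (fst st') = sig (fst st) + sum_list (map (\<lambda>x. if sh_type P x = sh_k P + 1 then x else 0) L)
         \<and> (\<forall>i\<le>sh_k P. fst (snd st') i = fst (snd st) i + length (filter (\<lambda>x. sh_type P x = i) L))"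
  using assms(1,3,4)
proof (induction rule: sh_exec.induct)
  case (exec_nil st)
  then show ?case by simp
next
  case (exec_cons st x st' xs st'')
  have x: "0 < x" "x \<le> 1" using exec_cons.prems by auto
  have S: "Inv P st' \<and> sig (fst st') = sig (fst st) + (if sh_type P x = sh_k P + 1 then x else 0)
         \<and> (\<forall>i\<le>sh_k P. fst (snd st') i = fst (snd st) i + (if sh_type P x = i then 1 else 0))"
    by (rule step_inv[OF adm exec_cons.hyps(1) x exec_cons.prems(2)])
  have IH: "Inv P st'' \<and> sig (fst st'') = sig (fst st') + sum_list (map (\<lambda>x. if sh_type P x = sh_k P + 1 then x else 0) xs)
         \<and> (\<forall>i\<le>sh_k P. fst (snd st'') i = fst (snd st') i + length (filter (\<lambda>x. sh_type P x = i) xs))"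
    using exec_cons.IH exec_cons.prems S by auto
  show ?case using S IH by auto
qed

definition wt :: "shparams \<Rightarrow> nat \<Rightarrow> nat \<Rightarrow> real" where
  "wt P m i =
       (let a = sh_alpha P i; b = real (sh_beta P i); g = sh_gamma P i;
            rf = (if g = 0 then 0 else a / real g);
            rh = (if g = 0 then 0 else a / (2 * real g));
            ph = sh_phi P i; vp = sh_varphi P i; K = sh_K P in
        if m = 1 then (1 - a) / b
        else if m = K + 1 then
          (if ph = 0 \<and> vp = 0 then (1 - a) / b
           else if ph = 0 \<and> vp > 0 then (1 - a) / b + rf
           else if ph > 0 \<and> vp = 0 then 0
           else rf)
        else
          (let j = K + 2 - m in
           if ph < j \<and> vp < j then (1 - a) / b + rh
           else if ph < j \<and> vp \<ge> j then (1 - a) / b + rf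
           else if ph \<ge> j \<and> vp \<ge> j then (1 - a) / (2 * b) + rf
           else (1 - a) / (2 * b) + rh))"

lemma W_other: "sh_type P x \<noteq> sh_k P + 1 \<Longrightarrow> sh_W P m x = wt P m (sh_type P x)"
  unfolding sh_W_def wt_def Let_def by simp

lemma W_small: "sh_type P x = sh_k P + 1 \<Longrightarrow> sh_W P m x = x / (1 - sh_eps P)"
  unfolding sh_W_def Let_def by simp

lemma sumW:
  assumes adm: "sh_admissible P" and L: "\<forall>x\<in>set L. 0 < x \<and> x \<le> 1"
  shows "sum_list (map (sh_W P m) L) =
     sum_list (map (\<lambda>x. if sh_type P x = sh_k P + 1 then x else 0) L) / (1 - sh_eps P)
     + (\<Sum>i\<in>{1..sh_k P}. real (length (filter (\<lambda>x. sh_type P x = i) L)) * wt P m i)"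
  using L
proof (induction L)
  case Nil then show ?case by simp
next
  case (Cons x L)
  have tp: "1 \<le> sh_type P x" "sh_type P x \<le> sh_k P + 1" using type_props[OF adm] Cons.prems by auto
  have IH: "sum_list (map (sh_W P m) L) =
     sum_list (map (\<lambda>x. if sh_type P x = sh_k P + 1 then x else 0) L) / (1 - sh_eps P)
     + (\<Sum>i\<in>{1..sh_k P}. real (length (filter (\<lambda>x. sh_type P x = i) L)) * wt P m i)"
    using Cons by auto
  show ?case
  proof (cases "sh_type P x = sh_k P + 1")
    case True
    have "(\<Sum>i\<in>{1..sh_k P}. real (length (filter (\<lambda>x. sh_type P x = i) (x # L))) * wt P m i)
        = (\<Sum>i\<in>{1..sh_k P}. real (length (filter (\<lambda>x. sh_type P x = i) L)) * wt P m i)"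
      using True by (intro sum.cong) auto
    then show ?thesis using IH True by (simp add: W_small add_divide_distrib)
  next
    case False
    let ?t = "sh_type P x"
    have t: "?t \<in> {1..sh_k P}" using tp False by auto
    have "(\<Sum>i\<in>{1..sh_k P}. real (length (filter (\<lambda>x. sh_type P x = i) (x # L))) * wt P m i)
        = (\<Sum>i\<in>{1..sh_k P}. real (length (filter (\<lambda>x. sh_type P x = i) L)) * wt P m i + (if i = ?t then wt P m i else 0))"
      by (intro sum.cong) (auto simp: algebra_simps)
    also have "\<dots> = (\<Sum>i\<in>{1..sh_k P}. real (length (filter (\<lambda>x. sh_type P x = i) L)) * wt P m i) + wt P m ?t"
      using t by (simp add: sum.distrib)
    finally show ?thesis using IH False by (simp add: W_other)
  qed
qed


definition cntL :: "(label \<Rightarrow> bool) \<Rightarrow> bin list \<Rightarrow> real" where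
  "cntL G bs = sum_list (map (\<lambda>b. if G (fst b) then 1 else 0) bs)"

lemma cntL_nonneg: "0 \<le> cntL G bs" unfolding cntL_def by (induction bs) auto

lemma cntL_zero: "\<forall>b\<in>set bs. \<not> G (fst b) \<Longrightarrow> cntL G bs = 0"
  unfolding cntL_def by (induction bs) auto

lemma cntL_small: "cntL (\<lambda>l. l = Small) bs = real (length (smF bs))"
  unfolding cntL_def smF_def by (induction bs) auto

lemma slack_bound:
  assumes "slack G cap c bs \<le> cap" "0 < cap" "\<forall>b\<in>set bs. 0 \<le> c b"
  shows "cntL G bs \<le> 1 + sum_list (map c bs) / cap"
proof -
  have eq: "slack G cap c bs = cap * cntL G bs - sum_list (map (\<lambda>b. if G (fst b) then c b else 0) bs)"
    unfolding slack_def cntL_def by (induction bs) (auto simp: algebra_simps)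
  have le: "sum_list (map (\<lambda>b. if G (fst b) then c b else 0) bs) \<le> sum_list (map c bs)"
    by (rule sum_list_mono) (use assms(3) in auto)
  have "cap * cntL G bs \<le> cap * (1 + sum_list (map c bs) / cap)"
    using eq le assms(1,2) by (simp add: algebra_simps)
  then show ?thesis using assms(2) by simp
qed

lemma sum_list_sum_swap:
  fixes g :: "nat \<Rightarrow> 'a \<Rightarrow> real"
  shows "sum_list (map (\<lambda>b. \<Sum>i\<in>I. g i b) xs) = (\<Sum>i\<in>I. sum_list (map (g i) xs))"
  by (induction xs) (auto simp: sum.distrib)

lemma count_decomp:
  fixes c d :: "nat \<Rightarrow> real"
  assumes "\<forall>b\<in>set bs. 1 \<le> (if fst b = Small then 1 else 0) + (\<Sum>i\<in>I. (if fst b = Single i then 1 else 0)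
      + c i * (if inB i (fst b) then 1 else 0) + d i * (if inR i (fst b) then 1 else 0))"
  shows "real (length bs) \<le> cntL (\<lambda>l. l = Small) bs
     + (\<Sum>i\<in>I. cntL (\<lambda>l. l = Single i) bs + c i * cntL (inB i) bs + d i * cntL (inR i) bs)"
proof -
  have "real (length bs) = sum_list (map (\<lambda>b. 1::real) bs)" by (induction bs) auto
  also have "\<dots> \<le> sum_list (map (\<lambda>b. (if fst b = Small then 1 else 0) + (\<Sum>i\<in>I. (if fst b = Single i then 1 else 0)
      + c i * (if inB i (fst b) then 1 else 0) + d i * (if inR i (fst b) then 1 else 0))) bs)"
    by (rule sum_list_mono) (use assms in auto)
  also have "\<dots> = cntL (\<lambda>l. l = Small) bs
     + (\<Sum>i\<in>I. cntL (\<lambda>l. l = Single i) bs + c i * cntL (inB i) bs + d i * cntL (inR i) bs)"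
    by (simp add: sum_list_addf sum_list_sum_swap sum_list_const_mult cntL_def)
  finally show ?thesis .
qed

lemma type_bound:
  assumes adm: "sh_admissible P" and rg: "\<forall>i\<in>{1..sh_k P}. sh_gamma P i = 0 \<longrightarrow> sh_alpha P i = 0"
    and inv: "Inv P (bs, s, e)" and i: "i \<in> {1..sh_k P}"
    and c: "0 \<le> c" "c \<le> 1" and d: "0 \<le> d" "d \<le> 1"
  shows "cntL (\<lambda>l. l = Single i) bs + c * cntL (inB i) bs + d * cntL (inR i) bs
     \<le> real (s i) * ((if sh_phi P i = 0 then 1 else c) * (1 - sh_alpha P i) / real (sh_beta P i)
          + d * sh_alpha P i / real (sh_gamma P i)) + 3"
proof -
  have ib: "Invb P bs" and ic: "Invc P bs s e" using inv unfolding Inv_def by auto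
  have beta: "1 \<le> real (sh_beta P i)" using beta_ge1[OF adm] i by auto
  have al: "0 \<le> sh_alpha P i" "sh_alpha P i \<le> 1" using adm i unfolding sh_admissible_def by auto
  have ei0: "TR P i bs = real (e i) \<and> TB P i bs + real (e i) = real (s i) \<and> e i = nat \<lfloor>sh_alpha P i * real (s i)\<rfloor>"
    using ic i unfolding Invc_def by (meson)
  then have ei: "TR P i bs = real (e i)" "TB P i bs + real (e i) = real (s i)" "e i = nat \<lfloor>sh_alpha P i * real (s i)\<rfloor>"
    by blast+
  have as: "0 \<le> sh_alpha P i * real (s i)" using al by simp
  have e_ge: "sh_alpha P i * real (s i) - 1 \<le> real (e i)"
  proof -
    have "sh_alpha P i * real (s i) - 1 \<le> of_int \<lfloor>sh_alpha P i * real (s i)\<rfloor>" by linarith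
    also have "\<dots> = real (nat \<lfloor>sh_alpha P i * real (s i)\<rfloor>)" using as by simp
    finally show ?thesis using ei(3) by simp
  qed
  have e_le: "real (e i) \<le> sh_alpha P i * real (s i)"
  proof -
    have "real (e i) = of_int \<lfloor>sh_alpha P i * real (s i)\<rfloor>" using ei(3) as by simp
    also have "\<dots> \<le> sh_alpha P i * real (s i)" by linarith
    finally show ?thesis .
  qed
  have TBle: "TB P i bs \<le> (1 - sh_alpha P i) * real (s i) + 1" using ei(2) e_ge by (simp add: algebra_simps)
  define y where "y = (1 - sh_alpha P i) * real (s i) / real (sh_beta P i)"
  define z where "z = sh_alpha P i * real (s i) / real (sh_gamma P i)"
  have y0: "0 \<le> y" unfolding y_def using al by simp
  have z0: "0 \<le> z" unfolding z_def using al by simp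
  have TBy: "TB P i bs / real (sh_beta P i) \<le> y + 1"
  proof -
    have "TB P i bs / real (sh_beta P i) \<le> ((1 - sh_alpha P i) * real (s i) + 1) / real (sh_beta P i)"
      using TBle beta by (simp add: divide_right_mono)
    also have "\<dots> = y + 1 / real (sh_beta P i)" unfolding y_def by (simp add: add_divide_distrib)
    also have "\<dots> \<le> y + 1" using beta by simp
    finally show ?thesis .
  qed
  have I: "slack (\<lambda>l. l = Single i) (real (sh_beta P i)) (\<lambda>b. real (cnt P Blue i b)) bs \<le> real (sh_beta P i)"
    "slack (inB i) (real (sh_beta P i)) (\<lambda>b. real (cnt P Blue i b)) bs \<le> real (sh_beta P i)"
    "slack (inR i) (real (sh_gamma P i)) (\<lambda>b. real (cnt P Red i b)) bs \<le> real (sh_gamma P i)"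
    using ib unfolding Invb_def by auto
  have S1: "cntL (\<lambda>l. l = Single i) bs \<le> 1 + TB P i bs / real (sh_beta P i)"
    using slack_bound[OF I(1)] beta unfolding TB_def by auto
  have S2: "cntL (inB i) bs \<le> 1 + TB P i bs / real (sh_beta P i)"
    using slack_bound[OF I(2)] beta unfolding TB_def by auto
  have S3: "cntL (inR i) bs \<le> 1 + z"
  proof (cases "sh_gamma P i = 0")
    case True
    then have "sh_alpha P i = 0" using rg i by auto
    then have "\<forall>b\<in>set bs. \<not> inR i (fst b)"
      using Invb_labok[OF ib] by (force simp: inR_def labok_def)
    then show ?thesis using cntL_zero z0 by simp
  next
    case False
    have "cntL (inR i) bs \<le> 1 + TR P i bs / real (sh_gamma P i)"
      using slack_bound[OF I(3)] False unfolding TR_def by auto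
    also have "TR P i bs / real (sh_gamma P i) \<le> z" unfolding z_def using ei(1) e_le
      by (simp add: divide_right_mono)
    finally show ?thesis by simp
  qed
  define co where "co = (if sh_phi P i = 0 then 1 else c)"
  have co: "0 \<le> co" "co \<le> 1" unfolding co_def using c by auto
  have A: "cntL (\<lambda>l. l = Single i) bs + c * cntL (inB i) bs \<le> co * (2 + y)"
  proof (cases "sh_phi P i = 0")
    case True
    then have "\<forall>b\<in>set bs. \<not> inB i (fst b)"
      using Invb_labok[OF ib] by (force simp: inB_def labok_def)
    then have "cntL (inB i) bs = 0" by (rule cntL_zero)
    then show ?thesis using S1 TBy True unfolding co_def by simp
  next
    case False
    then have "\<forall>b\<in>set bs. fst b \<noteq> Single i"
      using Invb_labok[OF ib] by (force simp: labok_def)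
    then have "cntL (\<lambda>l. l = Single i) bs = 0" by (intro cntL_zero) auto
    moreover have "c * cntL (inB i) bs \<le> c * (2 + y)"
      using S2 TBy c by (intro mult_left_mono) auto
    ultimately show ?thesis using False unfolding co_def by simp
  qed
  have B: "d * cntL (inR i) bs \<le> d * (1 + z)" using S3 d by (intro mult_left_mono) auto
  have "co * (2 + y) + d * (1 + z) \<le> co * y + d * z + 3" using co d by (simp add: algebra_simps)
  moreover have "real (s i) * (co * (1 - sh_alpha P i) / real (sh_beta P i) + d * sh_alpha P i / real (sh_gamma P i))
      = co * y + d * z" unfolding y_def z_def by (simp add: algebra_simps)
  ultimately show ?thesis using A B unfolding co_def by linarith
qed


lemma Delta_mono:
  assumes adm: "sh_admissible P" and "a \<le> b" "b \<le> sh_K P"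
  shows "sh_Delta P a \<le> sh_Delta P b"
  using assms(2,3)
proof (induction b)
  case 0 then show ?case by simp
next
  case (Suc b)
  show ?case
  proof (cases "a = Suc b")
    case True then show ?thesis by simp
  next
    case False
    then have "a \<le> b" "b < sh_K P" using Suc.prems by auto
    then have "sh_Delta P a \<le> sh_Delta P b" using Suc.IH by simp
    moreover have "sh_Delta P b < sh_Delta P (Suc b)" using adm \<open>b < sh_K P\<close> unfolding sh_admissible_def by auto
    ultimately show ?thesis by simp
  qed
qed

lemma gamma_zero_iff: "sh_gamma P i = 0 \<longleftrightarrow> sh_Delta P (sh_K P) < sh_t P i"
  unfolding sh_gamma_def by auto

lemma varphi_props:
  assumes adm: "sh_admissible P" and i: "1 \<le> i" "i \<le> sh_k P" and nt: "\<not> sh_Delta P (sh_K P) < sh_t P i"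
  shows "1 \<le> sh_varphi P i \<and> sh_varphi P i \<le> sh_K P \<and> sh_t P i \<le> sh_Delta P (sh_varphi P i)"
proof -
  have tp: "0 < sh_t P i" using t_pos[OF adm] i by auto
  have K1: "1 \<le> sh_K P"
  proof (rule ccontr)
    assume "\<not> 1 \<le> sh_K P"
    then have "sh_K P = 0" by simp
    then show False using nt tp adm unfolding sh_admissible_def by auto
  qed
  have ex: "\<exists>j. 1 \<le> j \<and> j \<le> sh_K P \<and> sh_t P i \<le> sh_Delta P j" using K1 nt by auto
  show ?thesis using LeastI_ex[OF ex] nt unfolding sh_varphi_def by simp
qed

lemma varphi_le:
  assumes adm: "sh_admissible P" and i: "1 \<le> i" "i \<le> sh_k P"
  shows "sh_varphi P i \<le> sh_K P"
  using varphi_props[OF adm i] by (cases "sh_Delta P (sh_K P) < sh_t P i") (auto simp: sh_varphi_def)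

lemma varphi_zero_iff:
  assumes adm: "sh_admissible P" and i: "1 \<le> i" "i \<le> sh_k P"
  shows "(sh_varphi P i = 0) = (sh_gamma P i = 0)"
  using varphi_props[OF adm i] gamma_zero_iff[of P i]
  by (cases "sh_Delta P (sh_K P) < sh_t P i") (auto simp: sh_varphi_def)

lemma vp_gt:
  assumes adm: "sh_admissible P" and i: "1 \<le> i" "i \<le> sh_k P" and g: "0 < sh_gamma P i"
    and l: "1 \<le> l" "l \<le> sh_K P" and nc: "\<not> (real (sh_gamma P i) * sh_t P i \<le> sh_Delta P l)"
  shows "l < sh_varphi P i"
proof (rule ccontr)
  assume "\<not> l < sh_varphi P i"
  then have vl: "sh_varphi P i \<le> l" by simp
  have nt: "\<not> sh_Delta P (sh_K P) < sh_t P i" using g gamma_zero_iff[of P i] by auto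
  have vp: "1 \<le> sh_varphi P i" "sh_t P i \<le> sh_Delta P (sh_varphi P i)" using varphi_props[OF adm i nt] by auto
  have tl: "sh_t P i \<le> sh_Delta P l" using vp Delta_mono[OF adm vl l(2)] by simp
  have tp: "0 < sh_t P i" using t_pos[OF adm] i by auto
  define q where "q = sh_Delta P 1 / sh_t P i"
  have gdef: "sh_gamma P i = max 1 (nat \<lfloor>q\<rfloor>)" using nt unfolding sh_gamma_def q_def by simp
  have "real (sh_gamma P i) * sh_t P i \<le> sh_Delta P l"
  proof (cases "nat \<lfloor>q\<rfloor> \<le> 1")
    case True
    then have "sh_gamma P i = 1" using gdef by simp
    then show ?thesis using tl by simp
  next
    case False
    have ge: "sh_gamma P i = nat \<lfloor>q\<rfloor>" using gdef False by simp
    have "0 \<le> \<lfloor>q\<rfloor>"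
    proof (rule ccontr)
      assume "\<not> 0 \<le> \<lfloor>q\<rfloor>"
      then have "nat \<lfloor>q\<rfloor> = 0" by simp
      with False show False by simp
    qed
    have "real (sh_gamma P i) = of_int \<lfloor>q\<rfloor>" using ge \<open>0 \<le> \<lfloor>q\<rfloor>\<close> by simp
    also have "\<dots> \<le> q" by linarith
    finally have "real (sh_gamma P i) * sh_t P i \<le> q * sh_t P i" using tp by (simp add: mult_right_mono)
    also have "\<dots> = sh_Delta P 1" unfolding q_def using tp by simp
    also have "\<dots> \<le> sh_Delta P l" using Delta_mono[OF adm l] .
    finally show ?thesis .
  qed
  then show False using nc by simp
qed

lemma rf_simp: "(if g = 0 then 0 else a / real g) = a / real (g::nat)" by simp
lemma rh_simp: "(if g = 0 then 0 else a / (2 * real g)) = (1/2) * (a / real (g::nat))" by simp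
lemma half_b: "(1 - a) / (2 * b) = (1/2) * ((1 - a) / (b::real))" by simp
lemma half_g: "a / (2 * b) = (1/2) * (a / (b::real))" by simp

lemma wt_case1:
  assumes adm: "sh_admissible P" and i: "1 \<le> i" "i \<le> sh_k P"
  shows "(if sh_phi P i = 0 then 1 else 0) * (1 - sh_alpha P i) / real (sh_beta P i)
         + 1 * sh_alpha P i / real (sh_gamma P i) \<le> wt P (sh_K P + 1) i"
proof (cases "sh_K P = 0")
  case True
  have tp: "0 < sh_t P i" using t_pos[OF adm] i by auto
  have "sh_gamma P i = 0" using True tp adm unfolding gamma_zero_iff sh_admissible_def by auto
  moreover have "sh_phi P i = 0" using True adm i unfolding sh_admissible_def by auto
  ultimately show ?thesis using True by (simp add: wt_def Let_def)
next
  case False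
  have vz: "(sh_varphi P i = 0) = (sh_gamma P i = 0)" by (rule varphi_zero_iff[OF adm i])
  have K: "sh_K P + 1 \<noteq> 1" using False by simp
  show ?thesis
  proof (cases "sh_phi P i = 0")
    case True
    then show ?thesis using K vz by (cases "sh_gamma P i = 0") (simp_all add: wt_def Let_def)
  next
    case False
    then show ?thesis using K vz by (cases "sh_gamma P i = 0") (simp_all add: wt_def Let_def)
  qed
qed

lemma wt_case2K:
  assumes adm: "sh_admissible P" and i: "1 \<le> i" "i \<le> sh_k P"
  shows "(if sh_phi P i = 0 then 1 else (if sh_phi P i \<le> sh_K P then 1 else 1/2)) * (1 - sh_alpha P i) / real (sh_beta P i)
         + ((if sh_K P < sh_varphi P i then 1/2 else 0) + (if sh_K P < sh_K P then 1/2 else 0)) * sh_alpha P i / real (sh_gamma P i)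
         \<le> wt P 1 i"
proof -
  have "sh_phi P i \<le> sh_K P" using adm i unfolding sh_admissible_def by auto
  moreover have "sh_varphi P i \<le> sh_K P" by (rule varphi_le[OF adm i])
  ultimately show ?thesis by (simp add: wt_def Let_def)
qed

lemma wt_case2:
  assumes adm: "sh_admissible P" and i: "1 \<le> i" "i \<le> sh_k P" and l: "1 \<le> l" "l < sh_K P"
  shows "(if sh_phi P i = 0 then 1 else (if sh_phi P i \<le> l then 1 else 1/2)) * (1 - sh_alpha P i) / real (sh_beta P i)
         + ((if l < sh_varphi P i then 1/2 else 0) + (if l < sh_K P then 1/2 else 0)) * sh_alpha P i / real (sh_gamma P i)
         \<le> wt P (sh_K P + 1 - l) i"
proof -
  have m: "sh_K P + 1 - l \<noteq> 1" "sh_K P + 1 - l \<noteq> sh_K P + 1" "sh_K P + 2 - (sh_K P + 1 - l) = l + 1"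
    using l by auto
  define A where "A = (1 - sh_alpha P i) / real (sh_beta P i)"
  define R where "R = sh_alpha P i / real (sh_gamma P i)"
  have f1: "(1 - sh_alpha P i) / (2 * real (sh_beta P i)) = A / 2" unfolding A_def by simp
  have f2: "sh_alpha P i / (2 * real (sh_gamma P i)) = R / 2" unfolding R_def by simp
  have f3: "(1 - sh_alpha P i) / real (sh_beta P i) = A" unfolding A_def by simp
  have f4: "sh_alpha P i / real (sh_gamma P i) = R" unfolding R_def by simp
  have f5: "x * (1 - sh_alpha P i) / real (sh_beta P i) = x * A" for x unfolding A_def by simp
  have f6: "x * sh_alpha P i / real (sh_gamma P i) = x * R" for x unfolding R_def by simp
  have rf: "(if sh_gamma P i = 0 then 0 else sh_alpha P i / real (sh_gamma P i)) = R" unfolding R_def by simp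
  have rh: "(if sh_gamma P i = 0 then 0 else sh_alpha P i / (2 * real (sh_gamma P i))) = R / 2" unfolding R_def by simp
  have wt_eq: "wt P (sh_K P + 1 - l) i = (if sh_phi P i \<le> l then A else A / 2) + (if l < sh_varphi P i then R else R / 2)"
    unfolding wt_def Let_def using m l by (simp add: rf rh f1 f3)
  have A0: "0 \<le> A" unfolding A_def using adm i unfolding sh_admissible_def by auto
  have R0: "0 \<le> R" unfolding R_def using adm i unfolding sh_admissible_def by auto
  show ?thesis unfolding f5 f6 wt_eq using l A0 R0 by auto
qed


lemma one_le_sum1:
  fixes g :: "nat \<Rightarrow> real"
  assumes "finite I" "i \<in> I" "\<forall>j\<in>I. 0 \<le> g j" "1 \<le> g i"
  shows "1 \<le> sum g I"
  using member_le_sum[of i I g] assms by auto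

lemma one_le_sum2:
  fixes g :: "nat \<Rightarrow> real"
  assumes "finite I" "i \<in> I" "j \<in> I" "i \<noteq> j" "\<forall>k\<in>I. 0 \<le> g k" "1 \<le> g i + g j"
  shows "1 \<le> sum g I"
proof -
  have "sum g {i, j} \<le> sum g I" by (rule sum_mono2) (use assms in auto)
  then show ?thesis using assms by simp
qed

lemma combine:
  assumes adm: "sh_admissible P" and rg: "\<forall>i\<in>{1..sh_k P}. sh_gamma P i = 0 \<longrightarrow> sh_alpha P i = 0"
    and inv: "Inv P (bs, s, e)"
    and cd: "\<forall>i\<in>{1..sh_k P}. 0 \<le> c i \<and> c i \<le> 1 \<and> 0 \<le> d i \<and> d i \<le> 1"
    and perbin: "\<forall>b\<in>set bs. 1 \<le> (if fst b = Small then 1 else 0) + (\<Sum>i\<in>{1..sh_k P}. (if fst b = Single i then 1 else 0)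
      + c i * (if inB i (fst b) then 1 else 0) + d i * (if inR i (fst b) then 1 else 0))"
    and wle: "\<forall>i\<in>{1..sh_k P}. (if sh_phi P i = 0 then 1 else c i) * (1 - sh_alpha P i) / real (sh_beta P i)
          + d i * sh_alpha P i / real (sh_gamma P i) \<le> wt P m i"
  shows "real (length bs) \<le> sig bs / (1 - sh_eps P) + (\<Sum>i\<in>{1..sh_k P}. real (s i) * wt P m i) + (1 + 3 * real (sh_k P))"
proof -
  have ib: "Invb P bs" using inv unfolding Inv_def by auto
  have D: "real (length bs) \<le> cntL (\<lambda>l. l = Small) bs
     + (\<Sum>i\<in>{1..sh_k P}. cntL (\<lambda>l. l = Single i) bs + c i * cntL (inB i) bs + d i * cntL (inR i) bs)"
    by (rule count_decomp[OF perbin])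
  have eps: "0 < 1 - sh_eps P" using eps_props[OF adm] by simp
  have I6: "(real (length (smF bs)) - 1) * (1 - sh_eps P) + lastlev bs \<le> sig bs" and lv: "\<forall>b\<in>set bs. 0 \<le> level b"
    using ib unfolding Invb_def by auto
  have ll: "0 \<le> lastlev bs"
  proof (cases "smF bs = []")
    case True then show ?thesis by (simp add: lastlev_def)
  next
    case False
    then have "last (smF bs) \<in> set bs" using last_in_set[OF False] unfolding smF_def by auto
    then show ?thesis using lv False by (simp add: lastlev_def)
  qed
  have "(real (length (smF bs)) - 1) * (1 - sh_eps P) \<le> sig bs" using I6 ll by simp
  then have "real (length (smF bs)) - 1 \<le> sig bs / (1 - sh_eps P)" using eps by (simp add: le_divide_eq)
  then have S: "cntL (\<lambda>l. l = Small) bs \<le> sig bs / (1 - sh_eps P) + 1" unfolding cntL_small by simp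
  have T: "(\<Sum>i\<in>{1..sh_k P}. cntL (\<lambda>l. l = Single i) bs + c i * cntL (inB i) bs + d i * cntL (inR i) bs)
      \<le> (\<Sum>i\<in>{1..sh_k P}. real (s i) * wt P m i + 3)"
  proof (rule sum_mono)
    fix i assume i: "i \<in> {1..sh_k P}"
    have "cntL (\<lambda>l. l = Single i) bs + c i * cntL (inB i) bs + d i * cntL (inR i) bs
       \<le> real (s i) * ((if sh_phi P i = 0 then 1 else c i) * (1 - sh_alpha P i) / real (sh_beta P i)
          + d i * sh_alpha P i / real (sh_gamma P i)) + 3"
      by (rule type_bound[OF adm rg inv i]) (use cd i in auto)
    also have "\<dots> \<le> real (s i) * wt P m i + 3" using wle i by (simp add: mult_left_mono)
    finally show "cntL (\<lambda>l. l = Single i) bs + c i * cntL (inB i) bs + d i * cntL (inR i) bs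
       \<le> real (s i) * wt P m i + 3" .
  qed
  have "(\<Sum>i\<in>{1..sh_k P}. real (s i) * wt P m i + 3) = (\<Sum>i\<in>{1..sh_k P}. real (s i) * wt P m i) + 3 * real (sh_k P)"
    by (simp add: sum.distrib)
  then show ?thesis using D S T by linarith
qed

lemma perbin_generic:
  fixes c d :: "nat \<Rightarrow> real"
  assumes lok: "labok P L" and cd: "\<forall>i\<in>{1..sh_k P}. 0 \<le> c i \<and> 0 \<le> d i"
    and hB: "\<And>i. L = BlueOnly i \<Longrightarrow> 1 \<le> c i"
    and hR: "\<And>j. L = RedOnly j \<Longrightarrow> 1 \<le> d j"
    and hM: "\<And>i j. L = Mixed i j \<Longrightarrow> 1 \<le> c i + d j"
  shows "1 \<le> (if L = Small then 1 else 0) + (\<Sum>i\<in>{1..sh_k P}. (if L = Single i then 1 else 0)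
      + c i * (if inB i L then 1 else 0) + d i * (if inR i L then 1 else 0))"
proof -
  let ?g = "\<lambda>i. (if L = Single i then 1 else 0) + c i * (if inB i L then 1 else 0) + d i * (if inR i L then 1 else 0)"
  have g0: "\<forall>j\<in>{1..sh_k P}. 0 \<le> ?g j" using cd by auto
  have fin: "finite {1..sh_k P}" by simp
  show ?thesis
  proof (cases L)
    case (Single i)
    then have "i \<in> {1..sh_k P}" using lok by (auto simp: labok_def)
    then have "1 \<le> sum ?g {1..sh_k P}" by (intro one_le_sum1[OF fin _ g0]) (use Single in auto)
    then show ?thesis using Single by simp
  next
    case (BlueOnly i)
    then have "i \<in> {1..sh_k P}" using lok by (auto simp: labok_def)
    then have "1 \<le> sum ?g {1..sh_k P}" by (intro one_le_sum1[OF fin _ g0]) (use BlueOnly hB in auto)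
    then show ?thesis using BlueOnly by simp
  next
    case (RedOnly j)
    then have "j \<in> {1..sh_k P}" using lok by (auto simp: labok_def)
    then have "1 \<le> sum ?g {1..sh_k P}" by (intro one_le_sum1[OF fin _ g0]) (use RedOnly hR in auto)
    then show ?thesis using RedOnly by simp
  next
    case (Mixed i j)
    then have ij: "i \<in> {1..sh_k P}" "j \<in> {1..sh_k P}" using lok by (auto simp: labok_def)
    have "1 \<le> sum ?g {1..sh_k P}"
    proof (cases "i = j")
      case True
      then show ?thesis by (intro one_le_sum1[OF fin ij(1) g0]) (use Mixed hM in auto)
    next
      case False
      then show ?thesis by (intro one_le_sum2[OF fin ij False g0]) (use Mixed hM in auto)
    qed
    then show ?thesis using Mixed by simp
  next
    case Small
    have "0 \<le> sum ?g {1..sh_k P}" using g0 by (intro sum_nonneg) auto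
    then show ?thesis using Small by simp
  qed
qed

lemma final_bound:
  assumes adm: "sh_admissible P" and rg: "\<forall>i\<in>{1..sh_k P}. sh_gamma P i = 0 \<longrightarrow> sh_alpha P i = 0"
    and inv: "Inv P (bs, s, e)"
  shows "\<exists>m\<in>{1..sh_K P + 1}. real (length bs) \<le> sig bs / (1 - sh_eps P)
            + (\<Sum>i\<in>{1..sh_k P}. real (s i) * wt P m i) + (1 + 3 * real (sh_k P))"
proof -
  have ib: "Invb P bs" using inv unfolding Inv_def by auto
  have lok: "\<And>b. b \<in> set bs \<Longrightarrow> labok P (fst b)" using Invb_labok[OF ib] .
  show ?thesis
  proof (cases "\<exists>b\<in>set bs. \<exists>i. fst b = BlueOnly i")
    case False
    define c :: "nat \<Rightarrow> real" where "c i = 0" for i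
    define d :: "nat \<Rightarrow> real" where "d i = 1" for i
    have cd: "\<forall>i\<in>{1..sh_k P}. 0 \<le> c i \<and> c i \<le> 1 \<and> 0 \<le> d i \<and> d i \<le> 1" unfolding c_def d_def by auto
    have perbin: "\<forall>b\<in>set bs. 1 \<le> (if fst b = Small then 1 else 0) + (\<Sum>i\<in>{1..sh_k P}. (if fst b = Single i then 1 else 0)
      + c i * (if inB i (fst b) then 1 else 0) + d i * (if inR i (fst b) then 1 else 0))"
    proof
      fix b assume b: "b \<in> set bs"
      show "1 \<le> (if fst b = Small then 1 else 0) + (\<Sum>i\<in>{1..sh_k P}. (if fst b = Single i then 1 else 0)
        + c i * (if inB i (fst b) then 1 else 0) + d i * (if inR i (fst b) then 1 else 0))"
        by (rule perbin_generic[OF lok[OF b]]) (use False b in \<open>auto simp: c_def d_def\<close>)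
    qed
    have "real (length bs) \<le> sig bs / (1 - sh_eps P)
            + (\<Sum>i\<in>{1..sh_k P}. real (s i) * wt P (sh_K P + 1) i) + (1 + 3 * real (sh_k P))"
    proof (rule combine[OF adm rg inv cd perbin])
      show "\<forall>i\<in>{1..sh_k P}. (if sh_phi P i = 0 then 1 else c i) * (1 - sh_alpha P i) / real (sh_beta P i)
          + d i * sh_alpha P i / real (sh_gamma P i) \<le> wt P (sh_K P + 1) i"
        using wt_case1[OF adm] unfolding c_def d_def by auto
    qed
    then show ?thesis by (intro bexI[of _ "sh_K P + 1"]) auto
  next
    case True
    define S where "S = {i. BlueOnly i \<in> fst ` set bs}"
    have Ssub: "S \<subseteq> {1..sh_k P}"
    proof
      fix i assume "i \<in> S"
      then obtain b where b: "b \<in> set bs" "fst b = BlueOnly i" unfolding S_def by auto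
      then show "i \<in> {1..sh_k P}" using lok[OF b(1)] b(2) by (simp add: labok_def)
    qed
    have Sfin: "finite S" using Ssub finite_subset by blast
    have Sne: "S \<noteq> {}" using True unfolding S_def by force
    define l where "l = Max (sh_phi P ` S)"
    have "l \<in> sh_phi P ` S" unfolding l_def using Sfin Sne by (intro Max_in) auto
    then obtain i0 where i0: "i0 \<in> S" "sh_phi P i0 = l" by auto
    have lmax: "\<And>i. i \<in> S \<Longrightarrow> sh_phi P i \<le> l" unfolding l_def using Sfin by auto
    have i0k: "i0 \<in> {1..sh_k P}" using i0 Ssub by auto
    have l1: "1 \<le> l"
    proof -
      obtain b where b: "b \<in> set bs" "fst b = BlueOnly i0" using i0(1) unfolding S_def by auto
      then have "sh_phi P i0 \<noteq> 0" using lok[OF b(1)] b(2) by (simp add: labok_def)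
      then show ?thesis using i0 by simp
    qed
    have phiK: "\<And>i. i \<in> {1..sh_k P} \<Longrightarrow> sh_phi P i \<le> sh_K P" using adm unfolding sh_admissible_def by auto
    have lK: "l \<le> sh_K P" using phiK[OF i0k] i0 by simp
    have nc: "nconf P (fst ` set bs)" using Invb_nconf[OF ib] .
    have red: "l < sh_varphi P j \<and> l < sh_K P" if j: "RedOnly j \<in> fst ` set bs" for j
    proof -
      obtain b where b: "b \<in> set bs" "fst b = RedOnly j" using j by auto
      have jk: "1 \<le> j" "j \<le> sh_k P" "0 < sh_alpha P j" using lok[OF b(1)] b(2) by (auto simp: labok_def)
      have g: "0 < sh_gamma P j" using rg jk by auto
      have "BlueOnly i0 \<in> fst ` set bs" using i0(1) unfolding S_def by auto
      then have "\<not> (real (sh_gamma P j) * sh_t P j \<le> sh_Delta P l)" using nc j i0(2) unfolding nconf_def by auto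
      then have "l < sh_varphi P j" using vp_gt[OF adm jk(1,2) g l1 lK] by simp
      moreover have "sh_varphi P j \<le> sh_K P" using varphi_le[OF adm jk(1,2)] .
      ultimately show ?thesis by simp
    qed
    define c :: "nat \<Rightarrow> real" where "c i = (if sh_phi P i \<le> l then 1 else 1/2)" for i
    define d :: "nat \<Rightarrow> real" where "d i = (if l < sh_varphi P i then 1/2 else 0) + (if l < sh_K P then 1/2 else 0)" for i
    have cd: "\<forall>i\<in>{1..sh_k P}. 0 \<le> c i \<and> c i \<le> 1 \<and> 0 \<le> d i \<and> d i \<le> 1" unfolding c_def d_def by auto
    have perbin: "\<forall>b\<in>set bs. 1 \<le> (if fst b = Small then 1 else 0) + (\<Sum>i\<in>{1..sh_k P}. (if fst b = Single i then 1 else 0)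
      + c i * (if inB i (fst b) then 1 else 0) + d i * (if inR i (fst b) then 1 else 0))"
    proof
      fix b assume b: "b \<in> set bs"
      show "1 \<le> (if fst b = Small then 1 else 0) + (\<Sum>i\<in>{1..sh_k P}. (if fst b = Single i then 1 else 0)
        + c i * (if inB i (fst b) then 1 else 0) + d i * (if inR i (fst b) then 1 else 0))"
      proof (rule perbin_generic[OF lok[OF b]])
        show "\<forall>i\<in>{1..sh_k P}. 0 \<le> c i \<and> 0 \<le> d i" using cd by auto
      next
        fix i assume "fst b = BlueOnly i"
        then have "i \<in> S" using b unfolding S_def by force
        then show "1 \<le> c i" using lmax unfolding c_def by auto
      next
        fix j assume "fst b = RedOnly j"
        then have "RedOnly j \<in> fst ` set bs" using b by force
        then show "1 \<le> d j" using red unfolding d_def by auto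
      next
        fix i j assume M: "fst b = Mixed i j"
        then have ik: "i \<in> {1..sh_k P}" using lok[OF b] by (auto simp: labok_def)
        show "1 \<le> c i + d j"
        proof (cases "sh_phi P i \<le> l")
          case True then show ?thesis unfolding c_def d_def by auto
        next
          case False
          then have "l < sh_K P" using phiK[OF ik] by simp
          then show ?thesis using False unfolding c_def d_def by auto
        qed
      qed
    qed
    show ?thesis
    proof (cases "l = sh_K P")
      case True
      have "real (length bs) \<le> sig bs / (1 - sh_eps P)
            + (\<Sum>i\<in>{1..sh_k P}. real (s i) * wt P 1 i) + (1 + 3 * real (sh_k P))"
      proof (rule combine[OF adm rg inv cd perbin])
        show "\<forall>i\<in>{1..sh_k P}. (if sh_phi P i = 0 then 1 else c i) * (1 - sh_alpha P i) / real (sh_beta P i)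
          + d i * sh_alpha P i / real (sh_gamma P i) \<le> wt P 1 i"
        proof
          fix i assume i: "i \<in> {1..sh_k P}"
          then have i1: "1 \<le> i" "i \<le> sh_k P" by auto
          show "(if sh_phi P i = 0 then 1 else c i) * (1 - sh_alpha P i) / real (sh_beta P i)
            + d i * sh_alpha P i / real (sh_gamma P i) \<le> wt P 1 i"
            unfolding c_def d_def True by (rule wt_case2K[OF adm i1])
        qed
      qed
      then show ?thesis by (intro bexI[of _ 1]) auto
    next
      case False
      then have lK': "l < sh_K P" using lK by simp
      have "real (length bs) \<le> sig bs / (1 - sh_eps P)
            + (\<Sum>i\<in>{1..sh_k P}. real (s i) * wt P (sh_K P + 1 - l) i) + (1 + 3 * real (sh_k P))"
      proof (rule combine[OF adm rg inv cd perbin])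
        show "\<forall>i\<in>{1..sh_k P}. (if sh_phi P i = 0 then 1 else c i) * (1 - sh_alpha P i) / real (sh_beta P i)
          + d i * sh_alpha P i / real (sh_gamma P i) \<le> wt P (sh_K P + 1 - l) i"
        proof
          fix i assume i: "i \<in> {1..sh_k P}"
          then have i1: "1 \<le> i" "i \<le> sh_k P" by auto
          show "(if sh_phi P i = 0 then 1 else c i) * (1 - sh_alpha P i) / real (sh_beta P i)
            + d i * sh_alpha P i / real (sh_gamma P i) \<le> wt P (sh_K P + 1 - l) i"
            unfolding c_def d_def by (rule wt_case2[OF adm i1 l1 lK'])
        qed
      qed
      then show ?thesis using l1 lK' by (intro bexI[of _ "sh_K P + 1 - l"]) auto
    qed
  qed
qed

theorem theorem1:
  fixes P :: shparams
  assumes adm: "sh_admissible P"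
    and red_only_if_gamma: "\<forall>i\<in>{1..sh_k P}. sh_gamma P i = 0 \<longrightarrow> sh_alpha P i = 0"
  shows "\<exists>C::real. \<forall>L st.
           (\<forall>x\<in>set L. 0 < x \<and> x \<le> 1) \<longrightarrow> sh_exec P sh_init L st \<longrightarrow>
           real (nbins st) \<le> Max ((\<lambda>m. sum_list (map (sh_W P m) L)) ` {1..sh_K P + 1}) + C"
proof -
  define C where "C = 1 + 3 * real (sh_k P)"
  show ?thesis
  proof (intro exI[of _ C] allI impI)
    fix L st assume L: "\<forall>x\<in>set L. 0 < x \<and> x \<le> 1" and ex: "sh_exec P sh_init L st"
    obtain bs s e where st: "st = (bs, s, e)" by (cases st) auto
    have R: "Inv P st \<and> sig (fst st) = sig (fst sh_init) + sum_list (map (\<lambda>x. if sh_type P x = sh_k P + 1 then x else 0) L)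
         \<and> (\<forall>i\<le>sh_k P. fst (snd st) i = fst (snd sh_init) i + length (filter (\<lambda>x. sh_type P x = i) L))"
      by (rule exec_inv[OF ex adm L Inv_init[OF adm]])
    have inv: "Inv P (bs, s, e)" and sg: "sig bs = sum_list (map (\<lambda>x. if sh_type P x = sh_k P + 1 then x else 0) L)"
      and sc: "\<forall>i\<le>sh_k P. s i = length (filter (\<lambda>x. sh_type P x = i) L)"
      using R st by (auto simp: sh_init_def sig_def smF_def)
    obtain m where m: "m \<in> {1..sh_K P + 1}" and b: "real (length bs) \<le> sig bs / (1 - sh_eps P)
            + (\<Sum>i\<in>{1..sh_k P}. real (s i) * wt P m i) + C"
      using final_bound[OF adm red_only_if_gamma inv] unfolding C_def by blast
    have "(\<Sum>i\<in>{1..sh_k P}. real (s i) * wt P m i)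
        = (\<Sum>i\<in>{1..sh_k P}. real (length (filter (\<lambda>x. sh_type P x = i) L)) * wt P m i)"
      using sc by (intro sum.cong) auto
    then have W: "sum_list (map (sh_W P m) L) = sig bs / (1 - sh_eps P) + (\<Sum>i\<in>{1..sh_k P}. real (s i) * wt P m i)"
      using sumW[OF adm L, of m] sg by simp
    have "sum_list (map (sh_W P m) L) \<le> Max ((\<lambda>m. sum_list (map (sh_W P m) L)) ` {1..sh_K P + 1})"
      by (rule Max_ge) (use m in auto)
    then show "real (nbins st) \<le> Max ((\<lambda>m. sum_list (map (sh_W P m) L)) ` {1..sh_K P + 1}) + C"
      using b W st unfolding nbins_def by simp
  qed
qed

end
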